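(* Let $q$ be odd, $\varepsilon=\left(\frac{-1}{q}\right)$, $\nu=\left(\frac2q\right)$. For every $k\ge1$, $T_k(1)=1$, $T_k(-1)=(-1)^k$, and, viewing $T_k$ as a map ${\mathbb F}_q\to{\mathbb F}_q$: (i) $T_k(\mathcal A_1^{\nu,\nu})\subset\mathcal A_1^{\nu,\nu}\sqcup\{1,-\varepsilon\}$ and $T_k(\mathcal A_1^{-\nu,\nu})\subset\mathcal A_1^{-\nu,\nu}\sqcup\{1,\varepsilon\}$. (ii) If $k$ is odd then $T_k(\mathcal A_1^{\varepsilon\nu,-\nu})\subset\mathcal A_1^{\varepsilon\nu,-\nu}\sqcup\{-1\}$ and $T_k(\mathcal A_1^{-\varepsilon\nu,-\nu})\subset\mathcal A_1^{-\varepsilon\nu,-\nu}$. (iii) If $k$ is even then $T_k(\mathcal A_1^{-\nu,-\nu})\subset\mathcal A_1^{\nu,\nu}\sqcup\{1,-\varepsilon\}$ and $T_k(\mathcal A_1^{\nu,-\nu})\subset\mathcal A_1^{-\nu,\nu}\sqcup\{1,\varepsilon\}$. (iv) If $(q-1)/2$ divides $k$, then $T_k({\mathbb F}_q)\subset\mathcal A_1^{+-}\sqcup\mathcal A_1^{-+}\sqcup\{1,-1\}=\{a\in{\mathbb F}_q:a^2-1\text{ is a nonsquare}\}\sqcup\{1,-1\}$; if in addition $k$ is even, $T_k({\mathbb F}_q)\subset\mathcal A_1^{-\nu,\nu}\sqcup\{1,-1\}$. (v) If $(q+1)/2$ divides $k$, then $T_k({\mathbb F}_q)\subset\mathcal A_1^{++}\sqcup\mathcal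 A_1^{--}\sqcup\{1,-1\}=\{a\in{\mathbb F}_q:a^2-1\text{ is a square (possibly }0)\}$; if in addition $k$ is even, $T_k({\mathbb F}_q)\subset\mathcal A_1^{\nu,\nu}\sqcup\{1,-1\}$. (vi) If $\mathcal A_1^{\varepsilon_1,\varepsilon_2}$ is nonempty, then $T_k$ permutes $\mathcal A_1^{\varepsilon_1,\varepsilon_2}$ iff $\gcd(k,d^{\nu\varepsilon_1,\nu\varepsilon_2})=1$, where $d^{++}=(q-1)/2$, $d^{+-}=q+1$, $d^{-+}=(q+1)/2$, $d^{--}=q-1$.
   Context: Chebyshev polynomials of the first kind $T_k\in\mathbb Z[x]$: $T_0=1$, $T_1=x$, $T_{k+2}=2xT_{k+1}-T_k$. $\left(\frac{a}{q}\right)$ is the Legendre symbol on ${\mathbb F}_q$. For $\varepsilon_1,\varepsilon_2\in\{1,-1\}$ (written $+,-$) and $\lambda\in{\mathbb F}_q^\times$, $\mathcal A_\lambda^{\varepsilon_1,\varepsilon_2}=\{u\in{\mathbb F}_q:\left(\frac{u-\lambda}{q}\right)=\varepsilon_1,\ \left(\frac{u+\lambda}{q}\right)=\varepsilon_2\}$. *)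

theory Defs
  imports Main
begin

fun cheb :: "nat \<Rightarrow> 'a::comm_ring_1 \<Rightarrow> 'a" where
  "cheb 0 x = 1"
| "cheb (Suc 0) x = x"
| "cheb (Suc (Suc n)) x = 2 * x * cheb (Suc n) x - cheb n x"

definition leg :: "'a::field \<Rightarrow> int" where
  "leg a = (if a = 0 then 0 else if (\<exists>b. b ^ 2 = a) then 1 else -1)"

definition Aset :: "'a::field \<Rightarrow> int \<Rightarrow> int \<Rightarrow> 'a set" where
  "Aset lam e1 e2 = {u. leg (u - lam) = e1 \<and> leg (u + lam) = e2}"

definition dpar :: "nat \<Rightarrow> int \<Rightarrow> int \<Rightarrow> nat" where
  "dpar q e1 e2 =
     (if e1 = 1 then (if e2 = 1 then (q - 1) div 2 else q + 1)
      else (if e2 = 1 then (q + 1) div 2 else q - 1))"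

end

theory Submission
  imports Defs "HOL-Algebra.Sylow" "HOL-Algebra.Multiplicative_Group" "HOL-Number_Theory.Cong"
begin


lemma card_two_to_one:
  assumes fin: "finite X" and fib: "\<And>x. x \<in> X \<Longrightarrow> card {y\<in>X. f y = f x} = 2"
  shows "card X = 2 * card (f ` X)"
proof -
  have X: "X = (\<Union>z\<in>f ` X. {y\<in>X. f y = z})" by auto
  have "card (\<Union>z\<in>f ` X. {y\<in>X. f y = z}) = (\<Sum>z\<in>f ` X. card {y\<in>X. f y = z})"
    by (rule card_UN_disjoint) (use fin in auto)
  also have "\<dots> = (\<Sum>z\<in>f ` X. 2)"
    by (rule sum.cong) (auto simp: fib)
  finally show ?thesis using X by simp
qed

lemma two_ne_zero_oddcard:
  assumes "odd (card (UNIV::'a::{finite,field} set))"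
  shows "(2::'a) \<noteq> 0"
proof
  assume h: "(2::'a) = 0"
  have h2: "x + 1 + 1 = (x::'a)" for x
  proof -
    have "x + 1 + 1 = x + 2" by (simp add: add.assoc)
    then show ?thesis using h by simp
  qed
  have "card (UNIV::'a set) = 2 * card ((\<lambda>x. {x, x+1}) ` (UNIV::'a set))"
  proof (rule card_two_to_one)
    fix x :: 'a
    have key: "({y, y+1} = {x, x+1}) = (y \<in> {x, x+1})" for y
    proof
      assume "{y, y+1} = {x, x+1}"
      then show "y \<in> {x, x+1}" by blast
    next
      assume "y \<in> {x, x+1}"
      then show "{y, y+1} = {x, x+1}" using h2[of x] by (auto simp: insert_commute)
    qed
    have "{y. {y, y+1} = {x, x+1}} = {x, x+1}" using key by blast
    moreover have "x + 1 \<noteq> x" by simp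
    ultimately show "card {y\<in>UNIV. {y, y+1} = {x, x+1}} = 2" by simp
  qed simp
  then show False using assms by simp
qed



definition grp :: "'b::comm_ring_1 set \<Rightarrow> 'b monoid" where
  "grp X = \<lparr>carrier = X, monoid.mult = (*), one = 1\<rparr>"

lemma grp_simps [simp]: "carrier (grp X) = X" "monoid.mult (grp X) = (*)" "one (grp X) = 1"
  by (simp_all add: grp_def)

lemma grp_pow: "x [^]\<^bsub>grp X\<^esub> (n::nat) = x ^ n"
  by (induction n) (simp_all add: mult.commute)

lemma grp_group:
  assumes one: "1 \<in> X" and cl: "\<And>x y. x \<in> X \<Longrightarrow> y \<in> X \<Longrightarrow> x * y \<in> X"
    and iv: "\<And>x. x \<in> X \<Longrightarrow> \<exists>y\<in>X. x * y = 1"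
  shows "group (grp X)"
  by (rule groupI) (auto simp: cl one mult.assoc dest: iv simp: mult.commute)

lemma grp_pow_card:
  fixes X :: "'b::comm_ring_1 set"
  assumes one: "1 \<in> X" and cl: "\<And>x y. x \<in> X \<Longrightarrow> y \<in> X \<Longrightarrow> x * y \<in> X"
    and iv: "\<And>x. x \<in> X \<Longrightarrow> \<exists>y\<in>X. x * y = 1" and x: "x \<in> X"
  shows "x ^ card X = 1"
proof -
  interpret group "grp X" by (rule grp_group[OF one cl iv])
  show ?thesis using pow_order_eq_1[of x] x by (simp add: grp_pow order_def)
qed

lemma pow_mod_eq:
  assumes "(x::'b::comm_ring_1) ^ n = 1"
  shows "x ^ m = x ^ (m mod n)"
proof -
  have "x ^ m = x ^ (n * (m div n) + m mod n)" by simp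
  also have "\<dots> = (x ^ n) ^ (m div n) * x ^ (m mod n)"
    by (simp only: power_add power_mult)
  finally show ?thesis using assms by simp
qed

lemma pow_inj_iff:
  fixes X :: "'b::comm_ring_1 set"
  assumes fin: "finite X" and one: "1 \<in> X" and cl: "\<And>x y. x \<in> X \<Longrightarrow> y \<in> X \<Longrightarrow> x * y \<in> X"
    and iv: "\<And>x. x \<in> X \<Longrightarrow> \<exists>y\<in>X. x * y = 1"
  shows "inj_on (\<lambda>x. x ^ k) X \<longleftrightarrow> coprime k (card X)"
proof
  assume inj: "inj_on (\<lambda>x. x ^ k) X"
  show "coprime k (card X)"
  proof (rule ccontr)
    assume nc: "\<not> coprime k (card X)"
    then have "gcd k (card X) \<noteq> 1" by (simp add: coprime_iff_gcd_eq_1)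
    then obtain p where p: "prime p" "p dvd gcd k (card X)" using prime_factor_nat by blast
    then have pk: "p dvd k" and pX: "p dvd card X" by auto
    then obtain m where m: "card X = p ^ 1 * m" by auto
    interpret G: group "grp X" by (rule grp_group[OF one cl iv])
    obtain P where P: "subgroup P (grp X)" "card P = p ^ 1"
      using sylow_thm[of p "grp X" 1 m] p(1) G.group_axioms m fin by (auto simp: order_def)
    have PX: "P \<subseteq> X" using P(1) subgroup.subset by fastforce
    have "card P \<ge> 2" using P(2) prime_ge_2_nat p(1) by simp
    then have "\<exists>x\<in>P. x \<noteq> 1"
      by (metis card_1_singletonE card_le_Suc0_iff_eq finite_subset fin PX not_less_eq_eq numeral_2_eq_2 one_le_numeral)
    then obtain x where x: "x \<in> P" "x \<noteq> 1" by blast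
    interpret H: group "(grp X)\<lparr>carrier := P\<rparr>" using P(1) G.group_axioms subgroup.subgroup_is_group by blast
    have "x [^]\<^bsub>(grp X)\<lparr>carrier := P\<rparr>\<^esub> order ((grp X)\<lparr>carrier := P\<rparr>) = 1"
      using H.pow_order_eq_1[of x] x by simp
    moreover have "x [^]\<^bsub>(grp X)\<lparr>carrier := P\<rparr>\<^esub> (n::nat) = x ^ n" for n
      by (induction n) (simp_all add: mult.commute grp_def)
    ultimately have "x ^ p = 1" using P(2) by (simp add: order_def)
    then have "x ^ k = 1" using pk by (auto simp: power_mult)
    moreover have "(1::'b) ^ k = 1" by simp
    ultimately have "x = 1" using inj x PX one by (metis inj_onD subsetD)
    then show False using x by simp
  qed
next
  assume cp: "coprime k (card X)"
  obtain a where a: "[k * a = Suc 0] (mod card X)" using cong_solve_coprime_nat[OF cp] by blast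
  show "inj_on (\<lambda>x. x ^ k) X"
  proof (rule inj_onI)
    fix x y assume x: "x \<in> X" and y: "y \<in> X" and e: "x ^ k = y ^ k"
    have xe: "x ^ card X = 1" and ye: "y ^ card X = 1" using grp_pow_card[OF one cl iv] x y by auto
    have "x ^ (k * a) = y ^ (k * a)" using e by (simp add: power_mult)
    then have "x ^ ((k * a) mod card X) = y ^ ((k * a) mod card X)"
      using pow_mod_eq[OF xe] pow_mod_eq[OF ye] by metis
    then have "x ^ (Suc 0 mod card X) = y ^ (Suc 0 mod card X)" using a by (simp add: cong_def)
    then have "x ^ (Suc 0 mod card X) * x ^ (Suc 0 - Suc 0 mod card X) = y ^ (Suc 0 mod card X) * y ^ (Suc 0 - Suc 0 mod card X)
          \<or> card X = 1"
      by (cases "card X = 1") auto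
    then show "x = y"
    proof
      assume "card X = 1"
      then have "X = {1}" using one by (metis card_1_singletonE singletonD)
      then show "x = y" using x y by simp
    next
      assume h: "x ^ (Suc 0 mod card X) * x ^ (Suc 0 - Suc 0 mod card X) = y ^ (Suc 0 mod card X) * y ^ (Suc 0 - Suc 0 mod card X)"
      have "Suc 0 mod card X \<le> Suc 0" by (simp add: mod_le_divisor le_Suc_eq mod_less_eq_dividend)
      then show "x = y" using h by (simp flip: power_add)
    qed
  qed
qed



locale absgrp =
  fixes H :: "'b::comm_ring_1 set" and u :: "'b \<Rightarrow> 'f::comm_ring_1" and k :: nat
  assumes fin: "finite H" and one: "1 \<in> H" and mone: "-1 \<in> H"
    and cl: "\<And>x y. x \<in> H \<Longrightarrow> y \<in> H \<Longrightarrow> x * y \<in> H"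
    and iv: "\<And>x. x \<in> H \<Longrightarrow> \<exists>y\<in>H. x * y = 1"
    and neq: "(1::'b) \<noteq> -1"
    and ueq: "\<And>x y. x \<in> H \<Longrightarrow> y \<in> H \<Longrightarrow> u x = u y \<longleftrightarrow> (y = x \<or> x * y = 1)"
    and uch: "\<And>x. x \<in> H \<Longrightarrow> cheb k (u x) = u (x ^ k)"
begin

definition K where "K = (\<lambda>x. x ^ 2) ` H"

lemma inv_uniq: "(x::'b) * y = 1 \<Longrightarrow> x * z = 1 \<Longrightarrow> y = z"
  by (metis mult.assoc mult.commute mult_1_right)

lemma hpow: "x \<in> H \<Longrightarrow> x ^ n \<in> H"
  by (induction n) (auto simp: one cl)

lemma KH: "K \<subseteq> H" unfolding K_def using hpow by auto

lemma Kone: "1 \<in> K" unfolding K_def using one by force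

lemma Kcl: "x \<in> K \<Longrightarrow> y \<in> K \<Longrightarrow> x * y \<in> K"
  unfolding K_def using cl by (auto simp: power_mult_distrib[symmetric])

lemma Kiv: "x \<in> K \<Longrightarrow> \<exists>y\<in>K. x * y = 1"
proof -
  assume "x \<in> K"
  then obtain z where z: "z \<in> H" "x = z ^ 2" unfolding K_def by auto
  obtain z' where z': "z' \<in> H" "z * z' = 1" using iv z(1) by auto
  have "z' ^ 2 \<in> K" unfolding K_def using z' by auto
  moreover have "x * z' ^ 2 = 1" using z z' by (simp add: power_mult_distrib[symmetric])
  ultimately show ?thesis by blast
qed

lemma Kpow: "x \<in> K \<Longrightarrow> x ^ n \<in> K"
  by (induction n) (auto simp: Kone Kcl)

lemma Heven: "x \<in> H \<Longrightarrow> even n \<Longrightarrow> x ^ n \<in> K"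
proof -
  assume x: "x \<in> H" and "even n"
  then obtain b where b: "n = 2 * b" by (auto elim: evenE)
  have "x ^ n = (x ^ b) ^ 2" using b by (simp add: power_mult[symmetric] mult.commute)
  then show "x ^ n \<in> K" unfolding K_def using hpow[OF x] by blast
qed

lemma pow_inv: "x * y = (1::'b) \<Longrightarrow> x ^ n * y ^ n = 1"
  by (simp add: power_mult_distrib[symmetric])

lemma cheb_bij_K:
  assumes A: "A = u ` (K - {1, -1})" and ne: "A \<noteq> {}"
  shows "bij_betw (cheb k) A A \<longleftrightarrow> inj_on (\<lambda>x. x ^ k) K"
proof
  assume inj: "inj_on (\<lambda>x. x ^ k) K"
  have finK: "finite K" using fin KH by (rule rev_finite_subset)
  have finA: "finite A" using finK by (simp add: A)
  have km: "x ^ k \<noteq> 1 \<and> x ^ k \<noteq> -1" if x: "x \<in> K - {1, -1}" for x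
  proof
    show "x ^ k \<noteq> 1"
    proof
      assume "x ^ k = 1"
      then have "x ^ k = 1 ^ k" by simp
      then have "x = 1" using inj_onD[OF inj, of x 1] x Kone by simp
      then show False using x by simp
    qed
    show "x ^ k \<noteq> -1"
    proof
      assume h: "x ^ k = -1"
      moreover have "x ^ k \<in> K" using Kpow x by simp
      ultimately have m1: "-1 \<in> K" by simp
      show False
      proof (cases "even k")
        case True
        then have "(-1::'b) ^ k = 1 ^ k" by simp
        then have "(-1::'b) = 1" by (rule inj_onD[OF inj]) (use m1 Kone in simp_all)
        then show False using neq by simp
      next
        case False
        then have "x ^ k = (-1) ^ k" using h by simp
        then have "x = -1" by (rule inj_onD[OF inj]) (use m1 x in simp_all)
        then show False using x by simp
      qed
    qed
  qed
  have img: "cheb k ` A \<subseteq> A"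
  proof
    fix a assume "a \<in> cheb k ` A"
    then obtain x where x: "x \<in> K - {1, -1}" "a = cheb k (u x)" using A by auto
    then have "a = u (x ^ k)" using uch KH by auto
    moreover have "x ^ k \<in> K - {1, -1}" using km[OF x(1)] Kpow x(1) by auto
    ultimately show "a \<in> A" using A by auto
  qed
  have injA: "inj_on (cheb k) A"
  proof (rule inj_onI)
    fix a b assume a: "a \<in> A" and b: "b \<in> A" and e: "cheb k a = cheb k b"
    obtain x where x: "x \<in> K - {1, -1}" "a = u x" using a A by auto
    obtain y where y: "y \<in> K - {1, -1}" "b = u y" using b A by auto
    have xH: "x \<in> H" and yH: "y \<in> H" using x y KH by auto
    have "u (x ^ k) = u (y ^ k)" using e x y uch xH yH by simp
    then have "y ^ k = x ^ k \<or> x ^ k * y ^ k = 1" using ueq[OF hpow[OF xH] hpow[OF yH]] by simp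
    then show "a = b"
    proof
      assume "y ^ k = x ^ k"
      then have "y = x" by (rule inj_onD[OF inj]) (use x y in simp_all)
      then show ?thesis using x y by simp
    next
      assume "x ^ k * y ^ k = 1"
      then have "(x * y) ^ k = 1 ^ k" by (simp add: power_mult_distrib)
      then have "x * y = 1" by (rule inj_onD[OF inj]) (use Kcl x y Kone in simp_all)
      then show ?thesis using x y ueq[OF xH yH] by simp
    qed
  qed
  have "cheb k ` A = A"
    using card_subset_eq[OF finA img] card_image[OF injA] by simp
  then show "bij_betw (cheb k) A A" using injA by (simp add: bij_betw_def)
next
  assume bij: "bij_betw (cheb k) A A"
  then have surj: "cheb k ` A = A" by (simp add: bij_betw_def)
  have sub: "(\<lambda>x. x ^ k) ` K \<subseteq> K" using Kpow by auto
  have gen: "y \<in> (\<lambda>x. x ^ k) ` K" if y: "y \<in> K - {1, -1}" for y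
  proof -
    have "u y \<in> cheb k ` A" using surj A y by auto
    then obtain x where x: "x \<in> K - {1, -1}" "u y = cheb k (u x)" using A by auto
    have xH: "x \<in> H" and yH: "y \<in> H" using x y KH by auto
    have "u y = u (x ^ k)" using x uch xH by simp
    then have "u (x ^ k) = u y" by simp
    then have "y = x ^ k \<or> x ^ k * y = 1" using ueq[OF hpow[OF xH] yH] by simp
    then show ?thesis
    proof
      assume "y = x ^ k" then show ?thesis using x by auto
    next
      assume h: "x ^ k * y = 1"
      obtain x' where x': "x' \<in> K" "x * x' = 1" using Kiv x by auto
      have "x ^ k * x' ^ k = 1" using pow_inv[OF x'(2)] .
      then have "y = x' ^ k" using h inv_uniq by blast
      then show ?thesis using x' by auto
    qed
  qed
  have "K \<subseteq> (\<lambda>x. x ^ k) ` K"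
  proof
    fix y assume y: "y \<in> K"
    show "y \<in> (\<lambda>x. x ^ k) ` K"
    proof (cases "y = 1")
      case True then show ?thesis using Kone by (auto intro: image_eqI[where x=1])
    next
      case n1: False
      show ?thesis
      proof (cases "y = -1")
        case False then show ?thesis using gen y n1 by auto
      next
        case True
        obtain a where a: "a \<in> A" using ne by auto
        then obtain x0 where x0: "x0 \<in> K - {1, -1}" using A by auto
        obtain x' where x': "x' \<in> K" "x0 * x' = 1" using Kiv x0 by auto
        define w where "w = -1 * x'"
        have wK: "w \<in> K" using Kcl[of "-1" x'] y True x' w_def by simp
        have "w \<noteq> 1"
        proof
          assume "w = 1"
          then have "- x' = 1" unfolding w_def by simp
          then have "x' = -1" by (metis minus_minus)
          then have "- x0 = 1" using x'(2) by simp
          then have "x0 = -1" by (metis minus_minus)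
          then show False using x0 by simp
        qed
        moreover have "w \<noteq> -1"
        proof
          assume "w = -1"
          then have "x' = 1" unfolding w_def by simp
          then show False using x'(2) x0 by simp
        qed
        ultimately have "w \<in> (\<lambda>x. x ^ k) ` K" using gen wK by auto
        then obtain b where b: "b \<in> K" "w = b ^ k" by auto
        obtain c where c: "c \<in> K" "x0 = c ^ k" using gen x0 by auto
        have "x0 * w = -1" unfolding w_def using x'(2) by simp
        then have "y = (c * b) ^ k" using True b c by (simp add: power_mult_distrib)
        then show ?thesis using Kcl b c by auto
      qed
    qed
  qed
  then have "(\<lambda>x. x ^ k) ` K = K" using sub by auto
  then show "inj_on (\<lambda>x. x ^ k) K"
  proof -
    have "finite K" using fin KH by (rule rev_finite_subset)
    then show ?thesis using eq_card_imp_inj_on[of K "\<lambda>x. x ^ k"] \<open>(\<lambda>x. x ^ k) ` K = K\<close> by simp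
  qed
qed


lemma odd_pow_notK:
  assumes x: "x \<in> H - K" and k: "odd n"
  shows "x ^ n \<in> H - K"
proof
  show "x ^ n \<in> H" using hpow x by auto
  show "x ^ n \<notin> K"
  proof
    assume "x ^ n \<in> K"
    then obtain y where y: "y \<in> H" "x ^ n = y ^ 2" unfolding K_def by auto
    obtain x' where x': "x' \<in> H" "x * x' = 1" using iv x by auto
    obtain j where j: "n = 2 * j + 1" using k oddE by blast
    have "x ^ n * (x' ^ j) ^ 2 = x * (x * x') ^ (2 * j)"
      by (simp add: j power_add power_mult_distrib power_mult mult_ac)
    then have "x = (y * x' ^ j) ^ 2" using x' y by (simp add: power_mult_distrib)
    moreover have "y * x' ^ j \<in> H" using cl hpow y x' by auto
    ultimately show False using x unfolding K_def by auto
  qed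
qed

lemma inv_notK:
  assumes x: "x \<in> H - K" and x': "x' \<in> H" "x * x' = 1"
  shows "x' \<in> H - K"
proof -
  have "x' \<notin> K"
  proof
    assume "x' \<in> K"
    then obtain z where z: "z \<in> K" "x' * z = 1" using Kiv by auto
    have "x = z" using inv_uniq[of x' x z] x' z by (simp add: mult.commute)
    then show False using x z by simp
  qed
  then show ?thesis using x' by simp
qed

lemma cheb_bij_S:
  assumes A: "A = u ` ((H - K) - {1, -1})" and ne: "A \<noteq> {}"
  shows "bij_betw (cheb k) A A \<longleftrightarrow> inj_on (\<lambda>x. x ^ k) H"
proof
  assume inj: "inj_on (\<lambda>x. x ^ k) H"
  have finA: "finite A" using fin by (simp add: A)
  have kodd: "odd k"
  proof
    assume "even k"
    then have "(-1::'b) ^ k = 1 ^ k" by simp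
    then have "(-1::'b) = 1" by (rule inj_onD[OF inj]) (use mone one in simp_all)
    then show False using neq by simp
  qed
  have km: "x ^ k \<in> (H - K) - {1, -1}" if x: "x \<in> (H - K) - {1, -1}" for x
  proof -
    have xs: "x ^ k \<in> H - K" using odd_pow_notK kodd x by auto
    moreover have "x ^ k \<noteq> 1" using xs Kone by auto
    moreover have "x ^ k \<noteq> -1"
    proof
      assume h: "x ^ k = -1"
      then have "x ^ k = (-1) ^ k" using kodd by simp
      then have "x = -1" by (rule inj_onD[OF inj]) (use mone x in simp_all)
      then show False using x by simp
    qed
    ultimately show ?thesis by simp
  qed
  have img: "cheb k ` A \<subseteq> A"
  proof
    fix a assume "a \<in> cheb k ` A"
    then obtain x where x: "x \<in> (H - K) - {1, -1}" "a = cheb k (u x)" using A by auto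
    then have "a = u (x ^ k)" using uch by auto
    then show "a \<in> A" using A km[OF x(1)] by auto
  qed
  have injA: "inj_on (cheb k) A"
  proof (rule inj_onI)
    fix a b assume a: "a \<in> A" and b: "b \<in> A" and e: "cheb k a = cheb k b"
    obtain x where x: "x \<in> (H - K) - {1, -1}" "a = u x" using a A by auto
    obtain y where y: "y \<in> (H - K) - {1, -1}" "b = u y" using b A by auto
    have xH: "x \<in> H" and yH: "y \<in> H" using x y by auto
    have "u (x ^ k) = u (y ^ k)" using e x y uch xH yH by simp
    then have "y ^ k = x ^ k \<or> x ^ k * y ^ k = 1" using ueq[OF hpow[OF xH] hpow[OF yH]] by simp
    then show "a = b"
    proof
      assume "y ^ k = x ^ k"
      then have "y = x" by (rule inj_onD[OF inj]) (use xH yH in simp_all)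
      then show ?thesis using x y by simp
    next
      assume "x ^ k * y ^ k = 1"
      then have "(x * y) ^ k = 1 ^ k" by (simp add: power_mult_distrib)
      then have "x * y = 1" by (rule inj_onD[OF inj]) (use cl xH yH one in simp_all)
      then show ?thesis using x y ueq[OF xH yH] by simp
    qed
  qed
  have "cheb k ` A = A"
    using card_subset_eq[OF finA img] card_image[OF injA] by simp
  then show "bij_betw (cheb k) A A" using injA by (simp add: bij_betw_def)
next
  assume bij: "bij_betw (cheb k) A A"
  then have surj: "cheb k ` A = A" by (simp add: bij_betw_def)
  have finS: "finite (H - K)" using fin by simp
  have kodd: "odd k"
  proof
    assume ev: "even k"
    obtain a where a: "a \<in> A" using ne by auto
    then obtain x where x: "x \<in> (H - K) - {1, -1}" "a = cheb k (u x)" using surj A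
      by (metis (no_types, lifting) image_iff)
    obtain y where y: "y \<in> (H - K) - {1, -1}" "a = u y" using a A by auto
    have xH: "x \<in> H" and yH: "y \<in> H" using x y by auto
    have "u (x ^ k) = u y" using x y uch xH by simp
    then have "y = x ^ k \<or> x ^ k * y = 1" using ueq[OF hpow[OF xH] yH] by simp
    moreover have xk: "x ^ k \<in> K" using Heven xH ev by simp
    ultimately show False using xk
    proof (elim disjE)
      assume "y = x ^ k" "x ^ k \<in> K" then show False using y by simp
    next
      assume h: "x ^ k * y = 1" "x ^ k \<in> K"
      obtain z where z: "z \<in> K" "x ^ k * z = 1" using Kiv xk by auto
      have "y = z" using inv_uniq h(1) z(2) by blast
      then show False using z y by simp
    qed
  qed
  have sub: "(\<lambda>x. x ^ k) ` (H - K) \<subseteq> H - K" using odd_pow_notK kodd by auto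
  have "H - K \<subseteq> (\<lambda>x. x ^ k) ` (H - K)"
  proof
    fix y assume y: "y \<in> H - K"
    show "y \<in> (\<lambda>x. x ^ k) ` (H - K)"
    proof (cases "y = -1")
      case True
      then have "y = (-1) ^ k" using kodd by simp
      then show ?thesis using y True by auto
    next
      case n1: False
      have "y \<noteq> 1" using y Kone by auto
      then have y2: "y \<in> (H - K) - {1, -1}" using y n1 by simp
      have "u y \<in> cheb k ` A" using surj A y2 by auto
      then obtain x where x: "x \<in> (H - K) - {1, -1}" "u y = cheb k (u x)" using A by auto
      have xH: "x \<in> H" and yH: "y \<in> H" using x y by auto
      have "u (x ^ k) = u y" using x uch xH by simp
      then have "y = x ^ k \<or> x ^ k * y = 1" using ueq[OF hpow[OF xH] yH] by simp
      then show ?thesis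
      proof
        assume "y = x ^ k" then show ?thesis using x by auto
      next
        assume h: "x ^ k * y = 1"
        obtain x' where x': "x' \<in> H" "x * x' = 1" using iv xH by auto
        have x'S: "x' \<in> H - K" using inv_notK[of x x'] x x' by auto
        have "x ^ k * x' ^ k = 1" using pow_inv[OF x'(2)] .
        then have "y = x' ^ k" using h inv_uniq by blast
        then show ?thesis using x'S by auto
      qed
    qed
  qed
  then have "(\<lambda>x. x ^ k) ` (H - K) = H - K" using sub by auto
  then have injS: "inj_on (\<lambda>x. x ^ k) (H - K)"
    using eq_card_imp_inj_on[of "H - K" "\<lambda>x. x ^ k"] finS by simp
  show "inj_on (\<lambda>x. x ^ k) H"
  proof (rule inj_onI, rule ccontr)
    fix x y assume xH: "x \<in> H" and yH: "y \<in> H" and e: "x ^ k = y ^ k" and ne': "x \<noteq> y"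
    obtain y' where y': "y' \<in> H" "y * y' = 1" using iv yH by auto
    define g where "g = x * y'"
    have gH: "g \<in> H" using cl xH y' g_def by simp
    have gk: "g ^ k = 1" unfolding g_def using e pow_inv[OF y'(2), of k]
      by (simp add: power_mult_distrib)
    have g1: "g \<noteq> 1"
    proof
      assume "g = 1"
      then have "y' * x = 1" by (simp add: g_def mult.commute)
      moreover have "y' * y = 1" using y'(2) by (simp add: mult.commute)
      ultimately have "x = y" using inv_uniq by blast
      then show False using ne' by simp
    qed
    have gK: "g \<in> K"
    proof -
      obtain j where j: "k = 2 * j + 1" using kodd oddE by blast
      have "g = g * g ^ k" using gk by simp
      also have "\<dots> = g ^ ((j + 1) * 2)" by (simp add: j mult.commute)
      also have "\<dots> = (g ^ (j + 1)) ^ 2" by (rule power_mult)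
      finally show ?thesis unfolding K_def using hpow[OF gH] by blast
    qed
    obtain a where a: "a \<in> A" using ne by auto
    then obtain s where s: "s \<in> (H - K) - {1, -1}" using A by auto
    have sg: "s * g \<in> H - K"
    proof -
      have "s * g \<notin> K"
      proof
        assume sgK: "s * g \<in> K"
        obtain g' where g': "g' \<in> K" "g * g' = 1" using Kiv gK by auto
        have "(s * g) * g' = s * (g * g')" by (simp add: mult_ac)
        then have "s = (s * g) * g'" using g'(2) by simp
        then show False using Kcl[OF sgK g'(1)] s by simp
      qed
      then show ?thesis using cl s gH by simp
    qed
    have "(s * g) ^ k = s ^ k" using gk by (simp add: power_mult_distrib)
    then have "s * g = s" by (rule inj_onD[OF injS]) (use sg s in simp_all)
    then have "s * g * s' = s * s'" if "s * s' = 1" for s' by simp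
    obtain s' where s': "s' \<in> H" "s * s' = 1" using iv s by auto
    have "g = 1" using \<open>s * g = s\<close> s'(2) by (metis mult.assoc mult.commute mult_1_right)
    then show False using g1 by simp
  qed
qed

end



locale oddf =
  fixes ty :: "'a::{finite,field} itself"
  assumes oddq: "odd (card (UNIV::'a set))"
begin


lemma two_nz: "(2::'a) \<noteq> 0" using two_ne_zero_oddcard oddq by blast

lemma neg_neq: "(x::'a) \<noteq> 0 \<Longrightarrow> -x \<noteq> x"
proof
  assume "x \<noteq> 0" "-x = x"
  then have "2 * x = 0" by (metis add_eq_0_iff mult_2)
  then show False using two_nz \<open>x \<noteq> 0\<close> by simp
qed

lemma one_neq_mone: "(1::'a) \<noteq> -1" using neg_neq[of 1] by auto

lemma sq_eq_iff: "(x::'a) ^ 2 = y ^ 2 \<longleftrightarrow> y = x \<or> y = -x"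
proof -
  have "x ^ 2 - y ^ 2 = (x - y) * (x + y)" by (simp add: power2_eq_square algebra_simps)
  then show ?thesis by (auto simp: eq_neg_iff_add_eq_0 add.commute)
qed

definition sqs :: "'a set" where "sqs = (\<lambda>x. x ^ 2) ` (UNIV - {0})"

lemma card_nz: "card (UNIV - {0::'a}) = card (UNIV::'a set) - 1" by (simp add: card_Diff_singleton)

lemma card_sqs: "card (UNIV::'a set) - 1 = 2 * card sqs"
proof -
  have "card (UNIV - {0::'a}) = 2 * card ((\<lambda>x. x ^ 2) ` (UNIV - {0::'a}))"
  proof (rule card_two_to_one)
    fix x :: 'a assume x: "x \<in> UNIV - {0}"
    have "{y \<in> UNIV - {0}. y ^ 2 = x ^ 2} = {x, -x}" using x by (auto simp: sq_eq_iff)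
    then show "card {y \<in> UNIV - {0}. y ^ 2 = x ^ 2} = 2" using neg_neq[of x] x by auto
  qed simp
  then show ?thesis by (simp add: sqs_def card_nz)
qed

lemma q_ge3: "card (UNIV::'a set) \<ge> 3"
proof -
  have "card {0::'a, 1} = 2" by simp
  then have "card (UNIV::'a set) \<ge> 2" by (metis card_mono finite subset_UNIV)
  then show ?thesis using oddq by presburger
qed

lemma sqs_nz: "0 \<notin> sqs" unfolding sqs_def by auto

lemma sqs_iff: "a \<in> sqs \<longleftrightarrow> a \<noteq> 0 \<and> (\<exists>b. b ^ 2 = a)"
  unfolding sqs_def by auto

definition nsq :: "'a set" where "nsq = UNIV - {0} - sqs"

lemma card_nsq: "card nsq = card sqs"
proof -
  have "card nsq = card (UNIV - {0::'a}) - card sqs"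
    unfolding nsq_def by (rule card_Diff_subset) (auto simp: sqs_nz)
  then show ?thesis using card_sqs card_nz by simp
qed

lemma nsq_ex: "\<exists>c::'a. c \<in> nsq"
proof -
  have "card sqs > 0" using card_sqs q_ge3 by simp
  then have "card nsq > 0" using card_nsq by simp
  then show ?thesis by (metis card_gt_0_iff ex_in_conv)
qed

lemma nsq_mult_sqs: assumes c: "c \<in> nsq" shows "(\<lambda>s. c * s) ` sqs = nsq"
proof (rule card_subset_eq)
  show "finite nsq" by simp
  show "(*) c ` sqs \<subseteq> nsq"
  proof
    fix y assume "y \<in> (*) c ` sqs"
    then obtain s where s: "s \<in> sqs" "y = c * s" by auto
    obtain b where b: "b ^ 2 = s" "b \<noteq> 0" using s sqs_iff by fastforce
    have "y \<notin> sqs"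
    proof
      assume "y \<in> sqs"
      then obtain d where "d ^ 2 = y" using sqs_iff by auto
      moreover have "s \<noteq> 0" using s sqs_nz by auto
      ultimately have "(d / b) ^ 2 = c" using s b by (simp add: power_divide)
      then show False using c unfolding nsq_def by (auto simp: sqs_iff)
    qed
    moreover have "y \<noteq> 0" using s c sqs_nz unfolding nsq_def by auto
    ultimately show "y \<in> nsq" unfolding nsq_def by simp
  qed
  have "inj_on ((*) c) sqs" using c unfolding nsq_def by (auto intro: inj_onI)
  then show "card ((*) c ` sqs) = card nsq" using card_image card_nsq by metis
qed

lemma nsq_mult_nsq: assumes "a \<in> nsq" "b \<in> nsq" shows "a * b \<in> sqs"
proof -
  obtain s where s: "s \<in> sqs" "b = a * s" using nsq_mult_sqs[OF assms(1)] assms(2) by blast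
  obtain d where d: "d ^ 2 = s" "d \<noteq> 0" using s sqs_iff by fastforce
  have "a * b = (a * d) ^ 2" using s d by (simp add: power2_eq_square)
  moreover have "a \<noteq> 0" using assms(1) nsq_def by auto
  ultimately show ?thesis using d sqs_iff by auto
qed

lemma nsq_D: "a \<in> nsq \<Longrightarrow> a \<noteq> 0 \<and> a \<notin> sqs" unfolding nsq_def by auto

lemma leg_cases: "leg (a::'a) = 0 \<and> a = 0 \<or> leg a = 1 \<and> a \<in> sqs \<or> leg a = -1 \<and> a \<in> nsq"
  by (cases "a = 0") (auto simp: leg_def nsq_def sqs_iff)

lemma leg_sqs: "leg a = 1 \<longleftrightarrow> (a::'a) \<in> sqs" using leg_cases[of a] nsq_D[of a] sqs_nz by auto
lemma leg_nsq: "leg a = -1 \<longleftrightarrow> (a::'a) \<in> nsq" using leg_cases[of a] nsq_D[of a] sqs_nz by auto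
lemma leg_zero: "leg a = 0 \<longleftrightarrow> (a::'a) = 0" using leg_cases[of a] nsq_D[of a] sqs_nz by auto

lemma sqs_mult: "a \<in> sqs \<Longrightarrow> b \<in> sqs \<Longrightarrow> a * b \<in> sqs"
  unfolding sqs_iff by (auto simp: power_mult_distrib[symmetric])

lemma sqs_nsq_mult: "a \<in> sqs \<Longrightarrow> b \<in> nsq \<Longrightarrow> a * b \<in> nsq"
  using nsq_mult_sqs[of b] by (auto simp: mult.commute)

lemma leg_mult: "leg ((a::'a) * b) = leg a * leg b"
proof -
  consider "a = 0" | "b = 0" | "a \<in> sqs" "b \<in> sqs" | "a \<in> sqs" "b \<in> nsq" | "a \<in> nsq" "b \<in> sqs"
    | "a \<in> nsq" "b \<in> nsq"
    using leg_cases[of a] leg_cases[of b] by blast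
  then show ?thesis
  proof cases
    case 1 then show ?thesis by (simp add: leg_def)
  next
    case 2 then show ?thesis by (simp add: leg_def)
  next
    case 3
    then have "leg a = 1" "leg b = 1" "leg (a * b) = 1" using sqs_mult[of a b] leg_sqs by blast+
    then show ?thesis by simp
  next
    case 4
    then have "leg a = 1" "leg b = -1" "leg (a * b) = -1" using sqs_nsq_mult[of a b] leg_sqs leg_nsq by blast+
    then show ?thesis by simp
  next
    case 5
    then have "leg a = -1" "leg b = 1" "leg (a * b) = -1" using sqs_nsq_mult[of b a] leg_sqs leg_nsq
      by (auto simp: mult.commute)
    then show ?thesis by simp
  next
    case 6
    then have "leg a = -1" "leg b = -1" "leg (a * b) = 1" using nsq_mult_nsq[of a b] leg_sqs leg_nsq by blast+
    then show ?thesis by simp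
  qed
qed

lemma leg_sq: "(b::'a) \<noteq> 0 \<Longrightarrow> leg (b ^ 2) = 1"
  using leg_sqs sqs_iff by auto

lemma leg_mult_sq: "(b::'a) \<noteq> 0 \<Longrightarrow> leg (a * b ^ 2) = leg a"
  by (simp add: leg_mult leg_sq)

lemma leg_one: "leg (1::'a) = 1" unfolding leg_def by (auto intro: exI[of _ 1])

lemma leg_pow: "leg ((a::'a) ^ n) = leg a ^ n"
  by (induction n) (simp_all only: power_0 power_Suc leg_mult leg_one)

lemma leg_vals: "leg (a::'a) \<in> {-1, 0, 1}" using leg_cases[of a] by auto

lemma fermat: "(x::'a) \<noteq> 0 \<Longrightarrow> x ^ (card (UNIV::'a set) - 1) = 1"
proof -
  assume x: "x \<noteq> 0"
  have "\<exists>y\<in>UNIV-{0}. z * y = 1" if "z \<noteq> 0" for z :: 'a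
    using that by (intro bexI[of _ "inverse z"]) auto
  then show ?thesis using grp_pow_card[of "UNIV - {0::'a}" x] card_nz x by auto
qed

end



lemma cheb_identity:
  fixes z w x :: "'b::comm_ring_1"
  assumes zw: "z * w = 1" and x: "2 * x = z + w"
  shows "2 * cheb k x = z ^ k + w ^ k"
  using x
proof (induction k x rule: cheb.induct)
  case (1 x) then show ?case by simp
next
  case (2 x) then show ?case using assms by simp
next
  case (3 n x)
  have "2 * cheb (Suc (Suc n)) x = (2 * x) * (2 * cheb (Suc n) x) - 2 * cheb n x"
    by (simp add: algebra_simps)
  also have "\<dots> = (z + w) * (z ^ Suc n + w ^ Suc n) - (z ^ n + w ^ n)"
    using 3 by simp
  also have "\<dots> = z ^ Suc (Suc n) + w ^ Suc (Suc n) + (z * w) * (z ^ n + w ^ n) - (z ^ n + w ^ n)"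
    by (simp add: algebra_simps)
  also have "\<dots> = z ^ Suc (Suc n) + w ^ Suc (Suc n)" using zw by simp
  finally show ?case .
qed

lemma cheb_1: "cheb k (1::'b::comm_ring_1) = 1"
  by (induction k "1::'b" rule: cheb.induct) simp_all

lemma cheb_m1: "cheb k (-1::'b::comm_ring_1) = (-1) ^ k"
  by (induction k "-1::'b" rule: cheb.induct) (simp_all add: algebra_simps)

datatype 'a ext = E (re: 'a) (im: 'a)

lemma ext_eq_iff: "x = y \<longleftrightarrow> re x = re y \<and> im x = im y"
  by (cases x; cases y) auto

definition cst :: "'a::field" where "cst = (SOME c. c \<noteq> 0 \<and> \<not> (\<exists>b. b ^ 2 = c))"

instantiation ext :: (field) comm_ring_1
begin
definition "0 = E 0 0"
definition "1 = E 1 0"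
definition "x + y = E (re x + re y) (im x + im y)"
definition "- x = E (- re x) (- im x)"
definition "x - y = E (re x - re y) (im x - im y)"
definition "x * y = E (re x * re y + cst * (im x * im y)) (re x * im y + im x * re y)"
instance
  by standard (auto simp: ext_eq_iff zero_ext_def one_ext_def plus_ext_def uminus_ext_def
      minus_ext_def times_ext_def algebra_simps)
end

lemma ext_simps [simp]:
  "re 0 = 0" "im 0 = 0" "re 1 = 1" "im 1 = 0"
  "re (x + y) = re x + re y" "im (x + y) = im x + im y"
  "re (- x) = - re x" "im (- x) = - im x"
  "re (x - y) = re x - re y" "im (x - y) = im x - im y"
  "re (x * y) = re x * re y + cst * (im x * im y)" "im (x * y) = re x * im y + im x * re y"
  by (simp_all add: zero_ext_def one_ext_def plus_ext_def uminus_ext_def minus_ext_def times_ext_def)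

lemma ext_two: "re (2::'a::field ext) = 2" "im (2::'a::field ext) = 0"
proof -
  have e: "(2::'a ext) = 1 + 1" by simp
  show "re (2::'a::field ext) = 2" unfolding e ext_simps by simp
  show "im (2::'a::field ext) = 0" unfolding e ext_simps by simp
qed

definition emb :: "'a::field \<Rightarrow> 'a ext" where "emb a = E a 0"

lemma emb_simps [simp]: "re (emb a) = a" "im (emb a) = 0" by (simp_all add: emb_def)

lemma emb_pow: "emb (a ^ n) = emb a ^ n"
  by (induction n) (simp_all add: ext_eq_iff)

lemma cheb_emb: "cheb k (emb a) = emb (cheb k a)"
  by (induction k a rule: cheb.induct) (simp_all add: ext_eq_iff ext_two)

definition cnj :: "'a::field ext \<Rightarrow> 'a ext" where "cnj x = E (re x) (- im x)"

lemma cnj_simps [simp]: "re (cnj x) = re x" "im (cnj x) = - im x" by (simp_all add: cnj_def)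

lemma cnj_mult: "cnj (x * y) = cnj x * cnj y" by (simp add: ext_eq_iff algebra_simps)

lemma cnj_pow: "cnj (x ^ n) = cnj x ^ n"
  by (induction n) (simp_all add: cnj_mult ext_eq_iff)

definition nrm :: "'a::field ext \<Rightarrow> 'a" where "nrm x = re x ^ 2 - cst * im x ^ 2"

lemma mult_cnj: "x * cnj x = emb (nrm x)"
  by (simp add: ext_eq_iff nrm_def power2_eq_square algebra_simps)

lemma nrm_mult: "nrm (x * y) = nrm x * nrm y"
  by (simp add: nrm_def power2_eq_square algebra_simps)

context oddf
begin

lemma cst_nsq: "(cst::'a) \<in> nsq"
proof -
  obtain c :: 'a where c: "c \<in> nsq" using nsq_ex by auto
  then have "c \<noteq> 0 \<and> \<not> (\<exists>b. b ^ 2 = c)" using nsq_D sqs_iff by blast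
  then have ex: "\<exists>c::'a. c \<noteq> 0 \<and> \<not> (\<exists>b. b ^ 2 = c)" by blast
  have "(cst::'a) \<noteq> 0 \<and> \<not> (\<exists>b. b ^ 2 = (cst::'a))"
    unfolding cst_def by (rule someI_ex[OF ex])
  then show ?thesis by (auto simp: nsq_def sqs_iff)
qed

lemma cst_nz: "(cst::'a) \<noteq> 0" using cst_nsq nsq_D by auto

lemma nrm_zero: "nrm (x::'a ext) = 0 \<longleftrightarrow> x = 0"
proof
  assume h: "nrm x = 0"
  show "x = 0"
  proof (cases "im x = 0")
    case True
    then show ?thesis using h by (simp add: nrm_def ext_eq_iff)
  next
    case False
    then have "cst = (re x / im x) ^ 2" using h by (simp add: nrm_def power_divide field_simps)
    then have "\<exists>b. b ^ 2 = (cst::'a)" by (intro exI[of _ "re x / im x"]) simp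
    then have "cst \<in> sqs" using cst_nz sqs_iff by blast
    then show ?thesis using cst_nsq nsq_D by blast
  qed
qed (simp add: nrm_def)

lemma ext_no_zd: "(x::'a ext) * y = 0 \<Longrightarrow> x = 0 \<or> y = 0"
proof -
  assume "x * y = 0"
  then have "nrm x * nrm y = 0" using nrm_mult[of x y] nrm_zero[of 0] by simp
  then have "nrm x = 0 \<or> nrm y = 0" by simp
  then show ?thesis using nrm_zero by blast
qed

lemma ext_sq_one: "(x::'a ext) ^ 2 = 1 \<Longrightarrow> x = 1 \<or> x = -1"
proof -
  assume "x ^ 2 = 1"
  then have "(x - 1) * (x + 1) = 0" by (simp add: algebra_simps power2_eq_square)
  then have "x - 1 = 0 \<or> x + 1 = 0" using ext_no_zd by blast
  then show ?thesis
  proof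
    assume "x - 1 = 0" then show ?thesis by simp
  next
    assume "x + 1 = 0" then have "x = -1" by (simp add: eq_neg_iff_add_eq_0) then show ?thesis by simp
  qed
qed

lemma emb_inj: "emb a = emb b \<longleftrightarrow> a = b" by (simp add: ext_eq_iff)

lemma ext_one_neq: "(1::'a ext) \<noteq> -1" using one_neq_mone by (simp add: ext_eq_iff)

end



instance ext :: (finite) finite
proof
  have "x \<in> (\<lambda>(a, b). E a b) ` UNIV" for x :: "'a ext"
    by (rule image_eqI[of _ _ "(re x, im x)"]) simp_all
  then have "(UNIV :: 'a ext set) = (\<lambda>(a, b). E a b) ` UNIV" by blast
  then show "finite (UNIV :: 'a ext set)" by (metis finite finite_imageI)
qed

definition GG :: "'a::field ext set" where "GG = {x. nrm x = 1}"

lemma emb_one: "emb 1 = 1" by (simp add: ext_eq_iff)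

lemma nrm_cnj: "nrm (cnj x) = nrm x" by (simp add: nrm_def)

lemma GG_one: "1 \<in> GG" by (simp add: GG_def nrm_def)
lemma GG_mone: "-1 \<in> GG" by (simp add: GG_def nrm_def)
lemma GG_cl: "x \<in> GG \<Longrightarrow> y \<in> GG \<Longrightarrow> x * y \<in> GG" by (simp add: GG_def nrm_mult)
lemma GG_cnj: "x \<in> GG \<Longrightarrow> x * cnj x = 1" by (simp add: GG_def mult_cnj emb_one)
lemma GG_iv: "x \<in> GG \<Longrightarrow> \<exists>y\<in>GG. x * y = 1"
  using GG_cnj by (intro bexI[of _ "cnj x"]) (auto simp: GG_def nrm_cnj)

context oddf
begin

lemma GG_fin: "finite (GG :: 'a ext set)" by simp

lemma GG_ueq:
  assumes z: "(z::'a ext) \<in> GG" and y: "y \<in> GG"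
  shows "re z = re y \<longleftrightarrow> (y = z \<or> z * y = 1)"
proof
  assume e: "re z = re y"
  have n1: "re z ^ 2 - cst * im z ^ 2 = 1" and n2: "re y ^ 2 - cst * im y ^ 2 = 1"
    using z y by (simp_all add: GG_def nrm_def)
  have "cst * im z ^ 2 = re z ^ 2 - 1" using n1 by (simp add: algebra_simps)
  moreover have "cst * im y ^ 2 = re y ^ 2 - 1" using n2 by (simp add: algebra_simps)
  ultimately have "cst * im z ^ 2 = cst * im y ^ 2" using e by simp
  then have "im z ^ 2 = im y ^ 2" using cst_nz by simp
  then have "im y = im z \<or> im y = - im z" by (simp add: sq_eq_iff)
  then show "y = z \<or> z * y = 1"
  proof
    assume "im y = im z" then show ?thesis using e by (simp add: ext_eq_iff)
  next
    assume "im y = - im z"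
    then have "y = cnj z" using e by (simp add: ext_eq_iff)
    then show ?thesis using GG_cnj[OF z] by blast
  qed
next
  assume "y = z \<or> z * y = 1"
  then show "re z = re y"
  proof
    assume "z * y = 1"
    then have "y = cnj z" using GG_cnj[OF z] by (metis mult.assoc mult.commute mult_1_right)
    then show ?thesis by simp
  qed simp
qed

lemma GG_uch:
  assumes z: "(z::'a ext) \<in> GG"
  shows "cheb k (re z) = re (z ^ k)"
proof -
  have "2 * cheb k (emb (re z)) = z ^ k + cnj z ^ k"
    by (rule cheb_identity) (use GG_cnj[OF z] in \<open>simp_all add: ext_eq_iff ext_two\<close>)
  then have "re (2 * cheb k (emb (re z))) = re (z ^ k + cnj (z ^ k))" by (simp add: cnj_pow)
  then have "2 * cheb k (re z) = 2 * re (z ^ k)" by (simp add: cheb_emb ext_two)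
  then show ?thesis using two_nz by simp
qed

definition pf :: "'a \<Rightarrow> 'a ext" where
  "pf t = E ((1 + cst * t ^ 2) / (1 - cst * t ^ 2)) (2 * t / (1 - cst * t ^ 2))"

lemma den_nz: "1 - cst * (t::'a) ^ 2 \<noteq> 0"
proof
  assume h: "1 - cst * t ^ 2 = 0"
  then have t: "t \<noteq> 0" by auto
  have "cst * t ^ 2 = 1" using h by simp
  then have "cst = (1 / t) ^ 2" using t by (simp add: power_divide eq_divide_eq)
  then have "\<exists>b. b ^ 2 = (cst::'a)" by (intro exI[of _ "1 / t"]) simp
  then have "cst \<in> sqs" using cst_nz sqs_iff by simp
  then show False using cst_nsq nsq_D by blast
qed

lemma pf_GG: "pf t \<in> GG"
proof -
  have d: "1 - cst * t ^ 2 \<noteq> 0" by (rule den_nz)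
  have "((1 + cst * t ^ 2) / (1 - cst * t ^ 2)) ^ 2 - cst * (2 * t / (1 - cst * t ^ 2)) ^ 2 = 1"
  proof -
    have e: "(1 + cst * t ^ 2) ^ 2 - cst * (2 * t) ^ 2 = (1 - cst * t ^ 2) ^ 2"
      by (simp add: power2_eq_square algebra_simps)
    have "((1 + cst * t ^ 2) / (1 - cst * t ^ 2)) ^ 2 - cst * (2 * t / (1 - cst * t ^ 2)) ^ 2
        = ((1 + cst * t ^ 2) ^ 2 - cst * (2 * t) ^ 2) / (1 - cst * t ^ 2) ^ 2"
      by (simp add: power_divide diff_divide_distrib)
    also have "\<dots> = 1" using d by (simp only: e) simp
    finally show ?thesis .
  qed
  then show ?thesis by (simp add: GG_def nrm_def pf_def)
qed

lemma pf_re1: "1 + re (pf t) = 2 / (1 - cst * t ^ 2)"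
proof -
  have d: "1 - cst * t ^ 2 \<noteq> 0" by (rule den_nz)
  show ?thesis using d by (simp add: pf_def field_simps)
qed

lemma pf_inv: "im (pf t) / (1 + re (pf t)) = t"
  using den_nz[of t] two_nz by (simp add: pf_re1) (simp add: pf_def field_simps)

lemma pf_nm1: "pf t \<noteq> -1"
proof
  assume "pf t = -1"
  then have "1 + re (pf t) = 0" by simp
  then show False using pf_re1[of t] den_nz[of t] two_nz by simp
qed

lemma GG_param:
  assumes z: "(z::'a ext) \<in> GG" and nz: "z \<noteq> -1"
  shows "z = pf (im z / (1 + re z))"
proof -
  define a where "a = re z"
  define b where "b = im z"
  have n: "a ^ 2 - cst * b ^ 2 = 1" using z by (simp add: GG_def nrm_def a_def b_def)
  have a1: "1 + a \<noteq> 0"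
  proof
    assume h: "1 + a = 0"
    then have "a = -1" by (metis add.commute eq_neg_iff_add_eq_0)
    then have "cst * b ^ 2 = 0" using n by simp
    then have "b = 0" using cst_nz by simp
    then show False using nz \<open>a = -1\<close> by (simp add: ext_eq_iff a_def b_def)
  qed
  define t where "t = b / (1 + a)"
  have "cst * b ^ 2 = a ^ 2 - (a ^ 2 - cst * b ^ 2)" by simp
  then have cb: "cst * b ^ 2 = a ^ 2 - 1" using n by simp
  have ct: "cst * t ^ 2 = (a - 1) / (a + 1)"
  proof -
    have "cst * t ^ 2 = cst * b ^ 2 / (1 + a) ^ 2" by (simp add: t_def power_divide)
    also have "\<dots> = (a ^ 2 - 1) / (1 + a) ^ 2" by (simp only: cb)
    also have "\<dots> = (a - 1) * (a + 1) / ((a + 1) * (a + 1))"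
      by (simp add: power2_eq_square algebra_simps)
    also have "\<dots> = (a - 1) / (a + 1)" using a1 by (simp add: add.commute)
    finally show ?thesis .
  qed
  have a1': "a + 1 \<noteq> 0" using a1 by (simp add: add.commute)
  have d: "1 - cst * t ^ 2 = 2 / (a + 1)" using a1' by (simp add: ct field_simps)
  have n1: "1 + cst * t ^ 2 = 2 * a / (a + 1)" using a1' by (simp add: ct field_simps)
  have r: "(1 + cst * t ^ 2) / (1 - cst * t ^ 2) = a"
    unfolding n1 d using a1' two_nz by simp
  have i: "2 * t / (1 - cst * t ^ 2) = b"
  proof -
    have "2 * t / (1 - cst * t ^ 2) = 2 * t / (2 / (a + 1))" by (simp only: d)
    also have "\<dots> = t * (a + 1)" using two_nz a1' by simp
    also have "\<dots> = b" using a1' by (simp add: t_def add.commute)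
    finally show ?thesis .
  qed
  show ?thesis unfolding pf_def using r i by (simp add: ext_eq_iff a_def b_def t_def)
qed

lemma GG_eq: "(GG :: 'a ext set) = insert (-1) (range pf)"
  using GG_param pf_GG GG_mone by blast

lemma card_GG: "card (GG :: 'a ext set) = card (UNIV::'a set) + 1"
proof -
  have "inj pf" by (rule inj_on_inverseI[of _ "\<lambda>z. im z / (1 + re z)"]) (simp add: pf_inv)
  then have "card (range pf) = card (UNIV::'a set)" by (simp add: card_image)
  moreover have "-1 \<notin> range pf"
  proof
    assume "-1 \<in> range pf"
    then obtain t where "-1 = pf t" by auto
    then show False using pf_nm1[of t] by simp
  qed
  ultimately show ?thesis by (simp add: GG_eq)
qed

definition KG :: "'a ext set" where "KG = (\<lambda>x. x ^ 2) ` GG"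

lemma GG_nz: "(z::'a ext) \<in> GG \<Longrightarrow> z \<noteq> 0" by (auto simp: GG_def nrm_def)

lemma ext_sq_eq: "(x::'a ext) ^ 2 = y ^ 2 \<Longrightarrow> y = x \<or> y = -x"
proof -
  assume "x ^ 2 = y ^ 2"
  then have "(y - x) * (y + x) = 0" by (simp add: algebra_simps power2_eq_square)
  then have "y - x = 0 \<or> y + x = 0" using ext_no_zd by blast
  then show ?thesis
  proof
    assume "y + x = 0" then show ?thesis by (simp add: eq_neg_iff_add_eq_0)
  qed simp
qed

lemma ext_neg_neq: "(x::'a ext) \<noteq> 0 \<Longrightarrow> -x \<noteq> x"
proof
  assume x: "x \<noteq> 0" and h: "-x = x"
  have "emb 2 * x = x + x" by (simp add: ext_eq_iff algebra_simps ext_two)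
  also have "\<dots> = 0" using h by (metis add.right_inverse)
  finally have "emb 2 * x = 0" .
  then have "emb (2::'a) = 0" using x ext_no_zd by blast
  then show False using two_nz by (simp add: ext_eq_iff)
qed

lemma card_KG: "card (UNIV::'a set) + 1 = 2 * card KG"
proof -
  have "card (GG :: 'a ext set) = 2 * card ((\<lambda>x. x ^ 2) ` (GG :: 'a ext set))"
  proof (rule card_two_to_one)
    fix x :: "'a ext" assume x: "x \<in> GG"
    have mx: "-x \<in> GG" using x by (simp add: GG_def nrm_def)
    have "{y \<in> GG. y ^ 2 = x ^ 2} = {x, -x}" using x mx by (auto dest: ext_sq_eq[of x, OF sym])
    then show "card {y \<in> GG. y ^ 2 = x ^ 2} = 2" using ext_neg_neq[OF GG_nz[OF x]] by auto
  qed simp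
  then show ?thesis by (simp add: KG_def card_GG)
qed

end



context oddf
begin

lemma four_nz: "(4::'a) \<noteq> 0"
proof -
  have "(2::'a) * 2 \<noteq> 0" using two_nz no_zero_divisors by blast
  then show ?thesis by simp
qed

lemma leg2_nz: "leg (2::'a) \<noteq> 0" using two_nz leg_zero by simp

lemma leg_sq_val: "leg (a::'a) \<noteq> 0 \<Longrightarrow> leg a * leg a = 1"
  using leg_vals[of a] by auto

lemma leg_half: "leg ((a::'a) / 2) = leg (2::'a) * leg a"
proof -
  have "(2::'a) * 2 \<noteq> 0" using two_nz no_zero_divisors by blast
  then have "(4::'a) \<noteq> 0" by simp
  then have e: "a / 2 = (2 * a) * (1 / 2) ^ 2" using two_nz by (simp add: power2_eq_square field_simps)
  have "leg ((2 * a) * (1 / 2) ^ 2) = leg (2::'a) * leg a"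
    by (subst leg_mult_sq) (use two_nz in \<open>simp_all add: leg_mult\<close>)
  then show ?thesis by (simp only: e)
qed

lemma sqs_E: "(a::'a) \<in> sqs \<Longrightarrow> \<exists>b. b ^ 2 = a \<and> b \<noteq> 0"
  unfolding sqs_def by auto

lemma sqs_ex: "leg (a::'a) = 1 \<Longrightarrow> \<exists>p. p ^ 2 = a \<and> p \<noteq> 0"
  using leg_sqs sqs_E by simp

lemma GG_class:
  assumes z: "(z::'a ext) \<in> GG" and z1: "z \<noteq> 1" and zm1: "z \<noteq> -1"
  shows "re z \<noteq> 1 \<and> re z \<noteq> -1 \<and> leg (re z - 1) * leg (re z + 1) = -1
     \<and> (leg (re z + 1) = leg (2::'a) \<longleftrightarrow> z \<in> KG)"
proof -
  define a where "a = re z"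
  define b where "b = im z"
  have n: "a ^ 2 - cst * b ^ 2 = 1" using z by (simp add: GG_def nrm_def a_def b_def)
  have "cst * b ^ 2 = a ^ 2 - (a ^ 2 - cst * b ^ 2)" by simp
  then have cb: "cst * b ^ 2 = a ^ 2 - 1" using n by simp
  have bnz: "b \<noteq> 0"
  proof
    assume "b = 0"
    then have "1 ^ 2 = a ^ 2" using n by simp
    then have "a = 1 \<or> a = -1" by (rule sq_eq_iff[THEN iffD1])
    then show False using z1 zm1 \<open>b = 0\<close> by (auto simp: ext_eq_iff a_def b_def)
  qed
  have a1: "a \<noteq> 1 \<and> a \<noteq> -1"
  proof
    show "a \<noteq> 1" proof assume "a = 1" then have "cst * b ^ 2 = 0" using cb by simp
      then show False using cst_nz bnz by simp qed
    show "a \<noteq> -1" proof assume "a = -1" then have "cst * b ^ 2 = 0" using cb by simp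
      then show False using cst_nz bnz by simp qed
  qed
  have am1: "a + 1 \<noteq> 0" using a1 by (metis add.commute eq_neg_iff_add_eq_0)
  have prod: "leg (a - 1) * leg (a + 1) = -1"
  proof -
    have "(a - 1) * (a + 1) = cst * b ^ 2" using cb by (simp add: power2_eq_square algebra_simps)
    then have "leg (a - 1) * leg (a + 1) = leg (cst * b ^ 2)" by (simp add: leg_mult[symmetric])
    also have "\<dots> = leg (cst::'a)" using bnz by (simp add: leg_mult_sq)
    also have "\<dots> = -1" using cst_nsq leg_nsq by simp
    finally show ?thesis .
  qed
  have iff: "leg (a + 1) = leg (2::'a) \<longleftrightarrow> z \<in> KG"
  proof
    assume h: "leg (a + 1) = leg (2::'a)"
    have "leg ((a + 1) / 2) = 1" using h leg_sq_val[OF leg2_nz] by (simp add: leg_half)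
    then obtain p where p: "p ^ 2 = (a + 1) / 2" "p \<noteq> 0" using sqs_ex by blast
    define r where "r = b / (2 * p)"
    have p2': "2 * p ^ 2 = a + 1" using p two_nz by (simp add: field_simps)
    have "(4::'a) * p ^ 2 = 2 * (2 * p ^ 2)" by simp
    then have p2: "4 * p ^ 2 = 2 * (a + 1)" by (simp only: p2')
    have cr: "cst * r ^ 2 = (a - 1) / 2"
    proof -
      have "cst * r ^ 2 = cst * b ^ 2 / (4 * p ^ 2)" by (simp add: r_def power_divide power_mult_distrib)
      also have "\<dots> = (a ^ 2 - 1) / (2 * (a + 1))" by (simp only: cb p2)
      also have "\<dots> = ((a - 1) * (a + 1)) / (2 * (a + 1))" by (simp add: power2_eq_square algebra_simps)
      also have "\<dots> = (a - 1) / 2" using am1 by (rule mult_divide_mult_cancel_right)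
      finally show ?thesis .
    qed
    have yG: "E p r \<in> GG"
    proof -
      have "p ^ 2 - cst * r ^ 2 = (a + 1) / 2 - (a - 1) / 2" by (simp only: p(1) cr)
      also have "\<dots> = 1" using two_nz four_nz by (simp add: field_simps)
      finally show ?thesis by (simp add: GG_def nrm_def)
    qed
    have "(E p r) ^ 2 = z"
    proof -
      have "p * p + cst * (r * r) = a"
      proof -
        have "p * p + cst * (r * r) = p ^ 2 + cst * r ^ 2" by (simp add: power2_eq_square)
        also have "\<dots> = (a + 1) / 2 + (a - 1) / 2" by (simp only: p(1) cr)
        also have "\<dots> = a" using two_nz four_nz by (simp add: field_simps)
        finally show ?thesis .
      qed
      moreover have "p * r + r * p = b" using p two_nz four_nz by (simp add: r_def field_simps)
      ultimately show ?thesis by (simp add: power2_eq_square ext_eq_iff a_def b_def)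
    qed
    then show "z \<in> KG" unfolding KG_def using yG by blast
  next
    assume "z \<in> KG"
    then obtain y where y: "y \<in> GG" "z = y ^ 2" unfolding KG_def by auto
    define p where "p = re y"
    define r where "r = im y"
    have ny: "p ^ 2 - cst * r ^ 2 = 1" using y by (simp add: GG_def nrm_def p_def r_def)
    have "a = p ^ 2 + cst * r ^ 2" using y by (simp add: a_def p_def r_def power2_eq_square)
    then have "a + 1 = 2 * p ^ 2" using ny by (simp add: algebra_simps)
    moreover have "p \<noteq> 0" using \<open>a + 1 = 2 * p ^ 2\<close> am1 by auto
    ultimately show "leg (a + 1) = leg (2::'a)" by (simp add: leg_mult_sq)
  qed
  show ?thesis using a1 prod iff by (simp add: a_def)
qed

lemma GG_surj:
  assumes "leg ((u::'a) ^ 2 - 1) = -1"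
  shows "\<exists>z\<in>GG. re z = u"
proof -
  have "u ^ 2 - 1 \<in> nsq" using assms leg_nsq by simp
  then have "(u ^ 2 - 1) * cst \<in> sqs" using cst_nsq nsq_mult_nsq by blast
  then obtain s where s: "s ^ 2 = (u ^ 2 - 1) * cst" using sqs_E by blast
  define b where "b = s / cst"
  have "cst * b ^ 2 = u ^ 2 - 1" using s cst_nz by (simp add: b_def power_divide power2_eq_square)
  then have "E u b \<in> GG" by (simp add: GG_def nrm_def)
  then show ?thesis by force
qed

lemma mone_KG: "(-1::'a ext) \<in> KG \<longleftrightarrow> leg (-1::'a) = -1"
proof
  assume "-1 \<in> KG"
  then obtain y :: "'a ext" where y: "y \<in> GG" "-1 = y ^ 2" unfolding KG_def by auto
  define p where "p = re y"
  define r where "r = im y"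
  have ny: "p ^ 2 - cst * r ^ 2 = 1" using y by (simp add: GG_def nrm_def p_def r_def)
  have re: "p ^ 2 + cst * r ^ 2 = -1"
  proof -
    have "re (y ^ 2) = -1" using y(2) by (metis ext_simps(3) ext_simps(7))
    then show ?thesis by (simp add: p_def r_def power2_eq_square)
  qed
  have "2 * p ^ 2 = 0" using ny re by (simp add: algebra_simps)
  then have "p = 0" using two_nz by simp
  then have cr: "cst * r ^ 2 = -1" using re by simp
  then have "r \<noteq> 0" by auto
  then show "leg (-1::'a) = -1" using cr[symmetric] cst_nsq leg_nsq by (simp add: leg_mult_sq)
next
  assume h: "leg (-1::'a) = -1"
  have "(-1::'a) \<in> nsq" using h leg_nsq by simp
  then have "(-1) * cst \<in> sqs" using cst_nsq nsq_mult_nsq by blast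
  then obtain s where s: "s ^ 2 = - (cst::'a)" using sqs_E by auto
  define r where "r = s / cst"
  have cr: "cst * r ^ 2 = -1" using s cst_nz by (simp add: r_def power_divide power2_eq_square)
  have "E 0 r \<in> GG" using cr by (simp add: GG_def nrm_def)
  moreover have "(E 0 r) ^ 2 = -1" using cr by (simp add: power2_eq_square ext_eq_iff)
  ultimately show "-1 \<in> KG" unfolding KG_def by force
qed

definition uS :: "'a \<Rightarrow> 'a" where "uS l = (l + inverse l) / 2"

lemma uS_one: "uS 1 = 1" using two_nz by (simp add: uS_def)
lemma uS_mone: "uS (-1) = -1" using two_nz by (simp add: uS_def)

lemma uS_eq:
  assumes l: "l \<in> UNIV - {0::'a}" and m: "m \<in> UNIV - {0::'a}"
  shows "uS l = uS m \<longleftrightarrow> (m = l \<or> l * m = 1)"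
proof
  assume "uS l = uS m"
  then have "(l + inverse l) / 2 = (m + inverse m) / 2" by (simp add: uS_def)
  then have "l + inverse l = m + inverse m" using two_nz by (metis divide_cancel_right)
  then have "(l - m) * (1 - inverse (l * m)) = 0" using l m by (simp add: field_simps)
  then have "l - m = 0 \<or> 1 - inverse (l * m) = 0" by simp
  then show "m = l \<or> l * m = 1"
  proof
    assume "1 - inverse (l * m) = 0"
    then have "inverse (l * m) = 1" by simp
    then have "l * m = 1" by (metis inverse_1 inverse_inverse_eq)
    then show ?thesis by simp
  qed simp
next
  assume "m = l \<or> l * m = 1"
  then show "uS l = uS m"
  proof
    assume "l * m = 1"
    then have "m = inverse l" "l = inverse m" using l m by (auto simp: field_simps)
    then show ?thesis by (simp add: uS_def add.commute)
  qed simp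
qed

lemma uS_cheb:
  assumes l: "(l::'a) \<noteq> 0"
  shows "cheb k (uS l) = uS (l ^ k)"
proof -
  have "2 * cheb k (uS l) = l ^ k + inverse l ^ k"
    by (rule cheb_identity) (use l two_nz in \<open>simp_all add: uS_def\<close>)
  then show ?thesis using two_nz by (simp add: uS_def power_inverse field_simps)
qed

lemma uS_class:
  assumes l: "(l::'a) \<noteq> 0" "l \<noteq> 1" "l \<noteq> -1"
  shows "leg (uS l - 1) = leg (2::'a) * leg l \<and> leg (uS l + 1) = leg (2::'a) * leg l"
proof
  have "uS l - 1 = (2 * l) * ((l - 1) / (2 * l)) ^ 2" using l two_nz four_nz
    by (simp add: uS_def power2_eq_square field_simps)
  moreover have "(l - 1) / (2 * l) \<noteq> 0" using l two_nz by simp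
  ultimately have "leg (uS l - 1) = leg (2 * l)" by (simp add: leg_mult_sq)
  then show "leg (uS l - 1) = leg (2::'a) * leg l" by (simp add: leg_mult)
next
  have "uS l + 1 = (2 * l) * ((l + 1) / (2 * l)) ^ 2" using l two_nz four_nz
    by (simp add: uS_def power2_eq_square field_simps)
  moreover have "(l + 1) / (2 * l) \<noteq> 0" using l two_nz by (simp add: add_eq_0_iff2)
  ultimately have "leg (uS l + 1) = leg (2 * l)" by (simp add: leg_mult_sq)
  then show "leg (uS l + 1) = leg (2::'a) * leg l" by (simp add: leg_mult)
qed

lemma uS_surj:
  assumes "leg ((u::'a) ^ 2 - 1) = 1"
  shows "\<exists>l. l \<noteq> 0 \<and> uS l = u"
proof -
  obtain s where s: "s ^ 2 = u ^ 2 - 1" using assms sqs_ex by blast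
  have "(u + s) * (u - s) = 1" using s by (simp add: power2_eq_square algebra_simps)
  then have nz: "u + s \<noteq> 0" and iv: "inverse (u + s) = u - s"
    by (auto intro: inverse_unique)
  have "uS (u + s) = u" using two_nz by (simp add: uS_def iv)
  then show ?thesis using nz by blast
qed

end



context oddf
begin

lemma nu_vals: "leg (2::'a) = 1 \<or> leg (2::'a) = -1"
  using leg_vals[of "2::'a"] leg2_nz by auto

lemma ep_vals: "leg (-1::'a) = 1 \<or> leg (-1::'a) = -1"
  using leg_vals[of "-1::'a"] leg_zero[of "-1::'a"] by auto

lemma Aset_mem: "u \<in> Aset 1 e1 e2 \<longleftrightarrow> leg ((u::'a) - 1) = e1 \<and> leg (u + 1) = e2"
  by (simp add: Aset_def)

lemma leg_pm1: "leg (x::'a) \<noteq> 0 \<Longrightarrow> leg x = 1 \<or> leg x = -1"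
  using leg_vals[of x] by auto

lemma Aset_not_pm1:
  assumes "(u::'a) \<in> Aset 1 e1 e2" "e1 \<noteq> 0" "e2 \<noteq> 0"
  shows "u \<noteq> 1 \<and> u \<noteq> -1"
  using assms by (auto simp: Aset_mem leg_def)

lemma split_class:
  assumes "(l::'a) \<noteq> 0" "l \<noteq> 1" "l \<noteq> -1"
  shows "uS l \<in> Aset 1 (leg (2::'a) * leg l) (leg (2::'a) * leg l)"
  using uS_class[OF assms] by (simp add: Aset_mem)

lemma ns_class:
  assumes z: "(z::'a ext) \<in> GG" "z \<noteq> 1" "z \<noteq> -1"
  shows "z \<in> KG \<Longrightarrow> re z \<in> Aset 1 (- leg (2::'a)) (leg (2::'a))"
    and "z \<notin> KG \<Longrightarrow> re z \<in> Aset 1 (leg (2::'a)) (- leg (2::'a))"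
proof -
  have c: "re z \<noteq> 1" "re z \<noteq> -1" "leg (re z - 1) * leg (re z + 1) = -1"
      "leg (re z + 1) = leg (2::'a) \<longleftrightarrow> z \<in> KG"
    using GG_class[OF z] by auto
  have "re z + 1 \<noteq> 0" using c(2) by (metis add.commute eq_neg_iff_add_eq_0)
  then have n1: "leg (re z + 1) \<noteq> 0" by (simp add: leg_zero)
  have n2: "leg (re z - 1) \<noteq> 0" using c(1) by (simp add: leg_zero)
  have A: "leg (re z - 1) = 1 \<or> leg (re z - 1) = -1" using leg_pm1[OF n2] .
  have B: "leg (re z + 1) = 1 \<or> leg (re z + 1) = -1" using leg_pm1[OF n1] .
  show "z \<in> KG \<Longrightarrow> re z \<in> Aset 1 (- leg (2::'a)) (leg (2::'a))"
  proof -
    assume "z \<in> KG"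
    then have b: "leg (re z + 1) = leg (2::'a)" using c(4) by simp
    then have "leg (re z - 1) = - leg (2::'a)" using c(3) A nu_vals by auto
    then show ?thesis using b by (simp add: Aset_mem)
  qed
  show "z \<notin> KG \<Longrightarrow> re z \<in> Aset 1 (leg (2::'a)) (- leg (2::'a))"
  proof -
    assume "z \<notin> KG"
    then have "leg (re z + 1) \<noteq> leg (2::'a)" using c(4) by simp
    then have b: "leg (re z + 1) = - leg (2::'a)" using B nu_vals by auto
    then have "leg (re z - 1) = leg (2::'a)" using c(3) A nu_vals by auto
    then show ?thesis using b by (simp add: Aset_mem)
  qed
qed

lemma cover:
  assumes "(u::'a) \<noteq> 1" "u \<noteq> -1"
  shows "(\<exists>l. l \<noteq> 0 \<and> l \<noteq> 1 \<and> l \<noteq> -1 \<and> u = uS l) \<or> (\<exists>z\<in>GG. z \<noteq> 1 \<and> z \<noteq> -1 \<and> u = re z)"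
proof -
  have "u ^ 2 - 1 \<noteq> 0"
  proof
    assume "u ^ 2 - 1 = 0"
    then have "1 ^ 2 = u ^ 2" by simp
    then have "u = 1 \<or> u = -1" by (rule sq_eq_iff[THEN iffD1])
    then show False using assms by simp
  qed
  then have "leg (u ^ 2 - 1) = 1 \<or> leg (u ^ 2 - 1) = -1" using leg_pm1 leg_zero by blast
  then show ?thesis
  proof
    assume "leg (u ^ 2 - 1) = 1"
    then obtain l where l: "l \<noteq> 0" "uS l = u" using uS_surj by blast
    then have "l \<noteq> 1" "l \<noteq> -1" using assms uS_one uS_mone by auto
    then show ?thesis using l by auto
  next
    assume "leg (u ^ 2 - 1) = -1"
    then obtain z where z: "z \<in> GG" "re z = u" using GG_surj by blast
    then have "z \<noteq> 1" "z \<noteq> -1" using assms by auto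
    then show ?thesis using z by auto
  qed
qed

lemma Aset_eq_pair:
  assumes "(u::'a) \<in> Aset 1 e1 e2" "u \<in> Aset 1 f1 f2"
  shows "e1 = f1 \<and> e2 = f2"
  using assms by (simp add: Aset_mem)

lemma classify:
  assumes u: "(u::'a) \<in> Aset 1 e1 e2" and e: "e1 \<noteq> 0" "e2 \<noteq> 0"
  shows "(\<exists>l. l \<noteq> 0 \<and> l \<noteq> 1 \<and> l \<noteq> -1 \<and> u = uS l \<and> e1 = leg (2::'a) * leg l \<and> e2 = leg (2::'a) * leg l)
    \<or> (\<exists>z\<in>GG. z \<noteq> 1 \<and> z \<noteq> -1 \<and> u = re z \<and>
         (z \<in> KG \<and> e1 = - leg (2::'a) \<and> e2 = leg (2::'a) \<or> z \<notin> KG \<and> e1 = leg (2::'a) \<and> e2 = - leg (2::'a)))"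
proof -
  have u1: "u \<noteq> 1" "u \<noteq> -1" using Aset_not_pm1[OF u e] by auto
  from cover[OF u1] show ?thesis
  proof
    assume "\<exists>l. l \<noteq> 0 \<and> l \<noteq> 1 \<and> l \<noteq> -1 \<and> u = uS l"
    then obtain l where l: "l \<noteq> 0" "l \<noteq> 1" "l \<noteq> -1" "u = uS l" by blast
    have "e1 = leg (2::'a) * leg l \<and> e2 = leg (2::'a) * leg l"
      using Aset_eq_pair[OF u] split_class[OF l(1-3)] l(4) by blast
    then show ?thesis using l by blast
  next
    assume "\<exists>z\<in>GG. z \<noteq> 1 \<and> z \<noteq> -1 \<and> u = re z"
    then obtain z where z: "z \<in> GG" "z \<noteq> 1" "z \<noteq> -1" "u = re z" by blast
    show ?thesis
    proof (cases "z \<in> KG")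
      case True
      then have "e1 = - leg (2::'a) \<and> e2 = leg (2::'a)"
        using Aset_eq_pair[OF u] ns_class(1)[OF z(1-3)] z(4) by blast
      then show ?thesis using z True by blast
    next
      case False
      then have "e1 = leg (2::'a) \<and> e2 = - leg (2::'a)"
        using Aset_eq_pair[OF u] ns_class(2)[OF z(1-3)] z(4) by blast
      then show ?thesis using z False by blast
    qed
  qed
qed

lemma nu_neq: "leg (2::'a) \<noteq> - leg (2::'a)" using leg2_nz by simp

lemma class_nn: "Aset 1 (leg (2::'a)) (leg (2::'a)) = uS ` (sqs - {1, -1})"
proof
  show "uS ` (sqs - {1, -1}) \<subseteq> Aset 1 (leg (2::'a)) (leg (2::'a))"
  proof
    fix u assume "u \<in> uS ` (sqs - {1, -1})"
    then obtain l where l: "l \<in> sqs" "l \<noteq> 1" "l \<noteq> -1" "u = uS l" by blast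
    have "l \<noteq> 0" using l(1) sqs_nz by auto
    moreover have "leg l = 1" using l(1) leg_sqs by simp
    ultimately show "u \<in> Aset 1 (leg (2::'a)) (leg (2::'a))" using split_class[of l] l by simp
  qed
  show "Aset 1 (leg (2::'a)) (leg (2::'a)) \<subseteq> uS ` (sqs - {1, -1})"
  proof
    fix u assume u: "(u::'a) \<in> Aset 1 (leg (2::'a)) (leg (2::'a))"
    from classify[OF u leg2_nz leg2_nz] nu_neq
    obtain l where l: "l \<noteq> 0" "l \<noteq> 1" "l \<noteq> -1" "u = uS l" "leg (2::'a) = leg (2::'a) * leg l" by metis
    then have "leg l = 1" using leg2_nz by simp
    then show "u \<in> uS ` (sqs - {1, -1})" using l leg_sqs by auto
  qed
qed

lemma class_mm: "Aset 1 (- leg (2::'a)) (- leg (2::'a)) = uS ` ((UNIV - {0}) - sqs - {1, -1})"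
proof
  show "uS ` ((UNIV - {0}) - sqs - {1, -1}) \<subseteq> Aset 1 (- leg (2::'a)) (- leg (2::'a))"
  proof
    fix u assume "u \<in> uS ` ((UNIV - {0}) - sqs - {1, -1})"
    then obtain l where l: "l \<noteq> 0" "l \<notin> sqs" "l \<noteq> 1" "l \<noteq> -1" "u = uS l" by blast
    have "l \<in> nsq" using l(1,2) by (simp add: nsq_def)
    then have "leg l = -1" using leg_nsq by simp
    then show "u \<in> Aset 1 (- leg (2::'a)) (- leg (2::'a))" using split_class[of l] l by simp
  qed
  show "Aset 1 (- leg (2::'a)) (- leg (2::'a)) \<subseteq> uS ` ((UNIV - {0}) - sqs - {1, -1})"
  proof
    fix u assume u: "(u::'a) \<in> Aset 1 (- leg (2::'a)) (- leg (2::'a))"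
    have nz: "- leg (2::'a) \<noteq> 0" using leg2_nz by simp
    from classify[OF u nz nz] nu_neq
    obtain l where l: "l \<noteq> 0" "l \<noteq> 1" "l \<noteq> -1" "u = uS l" "- leg (2::'a) = leg (2::'a) * leg l" by metis
    then have "leg l = -1" using leg2_nz nu_vals by auto
    then have "l \<notin> sqs" using leg_sqs[of l] by simp
    then show "u \<in> uS ` ((UNIV - {0}) - sqs - {1, -1})" using l by auto
  qed
qed

lemma class_mn: "Aset 1 (- leg (2::'a)) (leg (2::'a)) = re ` (KG - {1, -1})"
proof
  show "re ` (KG - {1, -1}) \<subseteq> Aset 1 (- leg (2::'a)) (leg (2::'a))"
  proof
    fix u assume "u \<in> re ` (KG - {1, -1})"
    then obtain z where z: "z \<in> KG" "z \<noteq> 1" "z \<noteq> -1" "u = re z" by blast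
    have "z \<in> GG" using z(1) GG_cl unfolding KG_def power2_eq_square by auto
    then show "u \<in> Aset 1 (- leg (2::'a)) (leg (2::'a))" using ns_class(1)[of z] z by simp
  qed
  show "Aset 1 (- leg (2::'a)) (leg (2::'a)) \<subseteq> re ` (KG - {1, -1})"
  proof
    fix u assume u: "(u::'a) \<in> Aset 1 (- leg (2::'a)) (leg (2::'a))"
    have nz: "- leg (2::'a) \<noteq> 0" using leg2_nz by simp
    from classify[OF u nz leg2_nz] nu_neq
    obtain z where z: "z \<in> GG" "z \<noteq> 1" "z \<noteq> -1" "u = re z" "z \<in> KG"
      using leg2_nz nu_vals by (auto simp: mult_eq_0_iff)
    then show "u \<in> re ` (KG - {1, -1})" by auto
  qed
qed

lemma class_nm: "Aset 1 (leg (2::'a)) (- leg (2::'a)) = re ` ((GG - KG) - {1, -1})"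
proof
  show "re ` ((GG - KG) - {1, -1}) \<subseteq> Aset 1 (leg (2::'a)) (- leg (2::'a))"
  proof
    fix u assume "u \<in> re ` ((GG - KG) - {1, -1})"
    then obtain z where z: "z \<in> GG" "z \<notin> KG" "z \<noteq> 1" "z \<noteq> -1" "u = re z" by blast
    then show "u \<in> Aset 1 (leg (2::'a)) (- leg (2::'a))" using ns_class(2)[of z] z by simp
  qed
  show "Aset 1 (leg (2::'a)) (- leg (2::'a)) \<subseteq> re ` ((GG - KG) - {1, -1})"
  proof
    fix u assume u: "(u::'a) \<in> Aset 1 (leg (2::'a)) (- leg (2::'a))"
    have nz: "- leg (2::'a) \<noteq> 0" using leg2_nz by simp
    from classify[OF u leg2_nz nz] nu_neq
    obtain z where z: "z \<in> GG" "z \<noteq> 1" "z \<noteq> -1" "u = re z" "z \<notin> KG"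
      using leg2_nz nu_vals by (auto simp: mult_eq_0_iff)
    then show "u \<in> re ` ((GG - KG) - {1, -1})" by auto
  qed
qed

end



context oddf
begin

lemma absgrp_S: "absgrp (UNIV - {0::'a}) uS k"
proof
  show "finite (UNIV - {0::'a})" by simp
  show "(1::'a) \<in> UNIV - {0}" by simp
  show "(-1::'a) \<in> UNIV - {0}" by simp
  show "x * y \<in> UNIV - {0}" if "x \<in> UNIV - {0::'a}" "y \<in> UNIV - {0::'a}" for x y using that by simp
  show "\<exists>y\<in>UNIV - {0}. x * y = 1" if "x \<in> UNIV - {0::'a}" for x
    using that by (intro bexI[of _ "inverse x"]) auto
  show "(1::'a) \<noteq> -1" by (rule one_neq_mone)
  show "uS x = uS y \<longleftrightarrow> (y = x \<or> x * y = 1)" if "x \<in> UNIV - {0::'a}" "y \<in> UNIV - {0::'a}" for x y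
    by (rule uS_eq[OF that])
  show "cheb k (uS x) = uS (x ^ k)" if "x \<in> UNIV - {0::'a}" for x using uS_cheb that by simp
qed

lemma absgrp_N: "absgrp (GG :: 'a ext set) re k"
proof
  show "finite (GG :: 'a ext set)" by simp
  show "(1::'a ext) \<in> GG" by (rule GG_one)
  show "(-1::'a ext) \<in> GG" by (rule GG_mone)
  show "x * y \<in> GG" if "x \<in> (GG :: 'a ext set)" "y \<in> GG" for x y using that by (rule GG_cl)
  show "\<exists>y\<in>GG. x * y = 1" if "x \<in> (GG :: 'a ext set)" for x using that by (rule GG_iv)
  show "(1::'a ext) \<noteq> -1" by (rule ext_one_neq)
  show "re x = re y \<longleftrightarrow> (y = x \<or> x * y = 1)" if "x \<in> (GG :: 'a ext set)" "y \<in> GG" for x y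
    by (rule GG_ueq[OF that])
  show "cheb k (re x) = re (x ^ k)" if "x \<in> (GG :: 'a ext set)" for x using GG_uch that by simp
qed

lemma S_K: "absgrp.K (UNIV - {0::'a}) = sqs" by (simp add: absgrp.K_def[OF absgrp_S] sqs_def)
lemma N_K: "absgrp.K (GG :: 'a ext set) = KG" by (simp add: absgrp.K_def[OF absgrp_N] KG_def)

lemma GG_pow: "(z::'a ext) \<in> GG \<Longrightarrow> z ^ n \<in> GG"
  using absgrp.hpow[OF absgrp_N] by blast

lemma KG_GG: "KG \<subseteq> (GG :: 'a ext set)" using absgrp.KH[OF absgrp_N] N_K by simp

lemma KG_pow: "(z::'a ext) \<in> KG \<Longrightarrow> z ^ n \<in> KG"
  using absgrp.Kpow[OF absgrp_N] N_K by metis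

lemma KG_one: "(1::'a ext) \<in> KG" using absgrp.Kone[OF absgrp_N] N_K by metis

lemma GG_even: "(z::'a ext) \<in> GG \<Longrightarrow> even n \<Longrightarrow> z ^ n \<in> KG"
  using absgrp.Heven[OF absgrp_N] N_K by metis

lemma GG_odd: "(z::'a ext) \<in> GG - KG \<Longrightarrow> odd n \<Longrightarrow> z ^ n \<in> GG - KG"
  using absgrp.odd_pow_notK[OF absgrp_N] N_K by metis

lemma sqs_pow: "(l::'a) \<in> sqs \<Longrightarrow> l ^ n \<in> sqs"
  using leg_sqs leg_pow by (metis power_one)

lemma nz_even_sqs: "(l::'a) \<noteq> 0 \<Longrightarrow> even n \<Longrightarrow> l ^ n \<in> sqs"
proof -
  assume "l \<noteq> 0" "even n"
  then have "leg l = 1 \<or> leg l = -1" using leg_pm1 leg_zero by blast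
  then have "leg (l ^ n) = 1" using \<open>even n\<close> by (auto simp: leg_pow)
  then show ?thesis using leg_sqs by simp
qed

lemma nsq_odd: "(l::'a) \<noteq> 0 \<Longrightarrow> l \<notin> sqs \<Longrightarrow> odd n \<Longrightarrow> l ^ n \<noteq> 0 \<and> l ^ n \<notin> sqs"
proof -
  assume l: "l \<noteq> 0" "l \<notin> sqs" "odd n"
  then have "l \<in> nsq" by (simp add: nsq_def)
  then have "leg l = -1" using leg_nsq by simp
  then have "leg (l ^ n) = -1" using l(3) by (simp add: leg_pow)
  then have "l ^ n \<in> nsq" using leg_nsq by simp
  then show ?thesis by (simp add: nsq_def)
qed

lemma mone_sqs: "(-1::'a) \<in> sqs \<longleftrightarrow> leg (-1::'a) = 1" using leg_sqs by simp

lemma re_pm1: "re (1::'a ext) = 1" "re (-1::'a ext) = -1" by simp_all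

lemma uS_sq_img:
  assumes "(m::'a) \<in> sqs"
  shows "uS m \<in> Aset 1 (leg (2::'a)) (leg (2::'a)) \<or> (m = 1 \<and> uS m = 1) \<or> (m = -1 \<and> uS m = -1)"
  using assms class_nn uS_one uS_mone by auto

lemma uS_nsq_img:
  assumes "(m::'a) \<noteq> 0" "m \<notin> sqs"
  shows "uS m \<in> Aset 1 (- leg (2::'a)) (- leg (2::'a)) \<or> (m = -1 \<and> uS m = -1)"
proof -
  have "m \<noteq> 1" using assms(2) sqs_iff by (metis one_power2 one_neq_zero)
  then show ?thesis using assms class_mm uS_mone by auto
qed

lemma re_K_img:
  assumes "(z::'a ext) \<in> KG"
  shows "re z \<in> Aset 1 (- leg (2::'a)) (leg (2::'a)) \<or> (z = 1 \<and> re z = 1) \<or> (z = -1 \<and> re z = -1)"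
  using assms class_mn by auto

lemma re_nK_img:
  assumes "(z::'a ext) \<in> GG - KG"
  shows "re z \<in> Aset 1 (leg (2::'a)) (- leg (2::'a)) \<or> (z = -1 \<and> re z = -1)"
proof -
  have "z \<noteq> 1" using assms KG_one by auto
  then show ?thesis using assms class_nm by auto
qed

end



context oddf
begin

lemma helper_sq:
  assumes "(m::'a) \<in> sqs"
  shows "uS m \<in> Aset (1::'a) (leg (2::'a)) (leg (2::'a)) \<union> {1, - of_int (leg (-1::'a))}"
proof -
  consider "uS m \<in> Aset (1::'a) (leg (2::'a)) (leg (2::'a))" | "m = 1 \<and> uS m = 1" | "m = -1 \<and> uS m = -1"
    using uS_sq_img[OF assms] by blast
  then show ?thesis
  proof cases
    case 3
    then have "leg (-1::'a) = 1" using assms mone_sqs by simp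
    then show ?thesis using 3 uS_mone by simp
  qed auto
qed

lemma helper_K:
  assumes "(z::'a ext) \<in> KG"
  shows "re z \<in> Aset (1::'a) (- leg (2::'a)) (leg (2::'a)) \<union> {1, of_int (leg (-1::'a))}"
proof -
  consider "re z \<in> Aset (1::'a) (- leg (2::'a)) (leg (2::'a))" | "z = 1 \<and> re z = 1" | "z = -1 \<and> re z = -1"
    using re_K_img[OF assms] by blast
  then show ?thesis
  proof cases
    case 3
    then have "leg (-1::'a) = -1" using assms mone_KG by simp
    then show ?thesis using 3 by simp
  qed auto
qed

lemma part_i1:
  "cheb k ` Aset (1::'a) (leg (2::'a)) (leg (2::'a)) \<subseteq> Aset (1::'a) (leg (2::'a)) (leg (2::'a)) \<union> {1, - of_int (leg (-1::'a))}"
proof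
  fix v assume "v \<in> cheb k ` Aset (1::'a) (leg (2::'a)) (leg (2::'a))"
  then obtain l where l: "l \<in> sqs" "v = cheb k (uS l)" using class_nn by auto
  have "l \<noteq> 0" using l(1) sqs_nz by auto
  then have "v = uS (l ^ k)" using l(2) uS_cheb by simp
  then show "v \<in> Aset (1::'a) (leg (2::'a)) (leg (2::'a)) \<union> {1, - of_int (leg (-1::'a))}"
    using helper_sq[OF sqs_pow[OF l(1)]] by simp
qed

lemma part_i2:
  "cheb k ` Aset (1::'a) (- leg (2::'a)) (leg (2::'a)) \<subseteq> Aset (1::'a) (- leg (2::'a)) (leg (2::'a)) \<union> {1, of_int (leg (-1::'a))}"
proof
  fix v assume "v \<in> cheb k ` Aset (1::'a) (- leg (2::'a)) (leg (2::'a))"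
  then obtain z where z: "z \<in> KG" "v = cheb k (re z)" using class_mn by auto
  have "z \<in> GG" using z(1) KG_GG by auto
  then have "v = re (z ^ k)" using z(2) GG_uch by simp
  then show "v \<in> Aset (1::'a) (- leg (2::'a)) (leg (2::'a)) \<union> {1, of_int (leg (-1::'a))}"
    using helper_K[OF KG_pow[OF z(1)]] by simp
qed

lemma part_mm_even:
  assumes "even k"
  shows "cheb k ` Aset (1::'a) (- leg (2::'a)) (- leg (2::'a)) \<subseteq> Aset (1::'a) (leg (2::'a)) (leg (2::'a)) \<union> {1, - of_int (leg (-1::'a))}"
proof
  fix v assume "v \<in> cheb k ` Aset (1::'a) (- leg (2::'a)) (- leg (2::'a))"
  then obtain l where l: "l \<noteq> 0" "v = cheb k (uS l)" using class_mm by auto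
  then have "v = uS (l ^ k)" using uS_cheb by simp
  then show "v \<in> Aset (1::'a) (leg (2::'a)) (leg (2::'a)) \<union> {1, - of_int (leg (-1::'a))}"
    using helper_sq[OF nz_even_sqs[OF l(1) assms]] by simp
qed

lemma part_nm_even:
  assumes "even k"
  shows "cheb k ` Aset (1::'a) (leg (2::'a)) (- leg (2::'a)) \<subseteq> Aset (1::'a) (- leg (2::'a)) (leg (2::'a)) \<union> {1, of_int (leg (-1::'a))}"
proof
  fix v assume "v \<in> cheb k ` Aset (1::'a) (leg (2::'a)) (- leg (2::'a))"
  then obtain z where z: "z \<in> GG" "v = cheb k (re z)" using class_nm by auto
  then have "v = re (z ^ k)" using GG_uch by simp
  then show "v \<in> Aset (1::'a) (- leg (2::'a)) (leg (2::'a)) \<union> {1, of_int (leg (-1::'a))}"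
    using helper_K[OF GG_even[OF z(1) assms]] by simp
qed

lemma part_nm_odd:
  assumes "odd k"
  shows "cheb k ` Aset (1::'a) (leg (2::'a)) (- leg (2::'a)) \<subseteq> Aset (1::'a) (leg (2::'a)) (- leg (2::'a)) \<union> {-1}"
    and "leg (-1::'a) = -1 \<Longrightarrow> cheb k ` Aset (1::'a) (leg (2::'a)) (- leg (2::'a)) \<subseteq> Aset (1::'a) (leg (2::'a)) (- leg (2::'a))"
proof -
  have main: "v \<in> Aset (1::'a) (leg (2::'a)) (- leg (2::'a)) \<or> (v = -1 \<and> (-1::'a ext) \<notin> KG)"
    if v: "v \<in> cheb k ` Aset (1::'a) (leg (2::'a)) (- leg (2::'a))" for v
  proof -
    obtain z where z: "z \<in> GG - KG" "v = cheb k (re z)" using class_nm v by auto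
    then have "v = re (z ^ k)" using GG_uch by simp
    have zk: "z ^ k \<in> GG - KG" using GG_odd[OF z(1) assms] .
    from re_nK_img[OF zk] show ?thesis
    proof
      assume "re (z ^ k) \<in> Aset (1::'a) (leg (2::'a)) (- leg (2::'a))"
      then show ?thesis using \<open>v = re (z ^ k)\<close> by simp
    next
      assume h: "z ^ k = -1 \<and> re (z ^ k) = -1"
      then have "(-1::'a ext) \<notin> KG" using zk by auto
      then show ?thesis using h \<open>v = re (z ^ k)\<close> by simp
    qed
  qed
  show "cheb k ` Aset (1::'a) (leg (2::'a)) (- leg (2::'a)) \<subseteq> Aset (1::'a) (leg (2::'a)) (- leg (2::'a)) \<union> {-1}"
    using main by blast
  show "cheb k ` Aset (1::'a) (leg (2::'a)) (- leg (2::'a)) \<subseteq> Aset (1::'a) (leg (2::'a)) (- leg (2::'a))"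
    if "leg (-1::'a) = -1" using main mone_KG that by blast
qed

lemma part_mm_odd:
  assumes "odd k"
  shows "cheb k ` Aset (1::'a) (- leg (2::'a)) (- leg (2::'a)) \<subseteq> Aset (1::'a) (- leg (2::'a)) (- leg (2::'a)) \<union> {-1}"
    and "leg (-1::'a) = 1 \<Longrightarrow> cheb k ` Aset (1::'a) (- leg (2::'a)) (- leg (2::'a)) \<subseteq> Aset (1::'a) (- leg (2::'a)) (- leg (2::'a))"
proof -
  have main: "v \<in> Aset (1::'a) (- leg (2::'a)) (- leg (2::'a)) \<or> (v = -1 \<and> (-1::'a) \<notin> sqs)"
    if v: "v \<in> cheb k ` Aset (1::'a) (- leg (2::'a)) (- leg (2::'a))" for v
  proof -
    obtain l where l: "l \<noteq> 0" "l \<notin> sqs" "v = cheb k (uS l)" using class_mm v by auto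
    then have "v = uS (l ^ k)" using uS_cheb by simp
    have lk: "l ^ k \<noteq> 0" "l ^ k \<notin> sqs" using nsq_odd[OF l(1,2) assms] by auto
    from uS_nsq_img[OF lk] show ?thesis
    proof
      assume "uS (l ^ k) \<in> Aset (1::'a) (- leg (2::'a)) (- leg (2::'a))"
      then show ?thesis using \<open>v = uS (l ^ k)\<close> by simp
    next
      assume h: "l ^ k = -1 \<and> uS (l ^ k) = -1"
      then have "(-1::'a) \<notin> sqs" using lk(2) by simp
      then show ?thesis using h \<open>v = uS (l ^ k)\<close> uS_mone by simp
    qed
  qed
  show "cheb k ` Aset (1::'a) (- leg (2::'a)) (- leg (2::'a)) \<subseteq> Aset (1::'a) (- leg (2::'a)) (- leg (2::'a)) \<union> {-1}"
    using main by blast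
  show "cheb k ` Aset (1::'a) (- leg (2::'a)) (- leg (2::'a)) \<subseteq> Aset (1::'a) (- leg (2::'a)) (- leg (2::'a))"
    if "leg (-1::'a) = 1" using main mone_sqs that by blast
qed

end



lemma pm1_pow: "(x::'b::comm_ring_1) = 1 \<or> x = -1 \<Longrightarrow> x ^ j = 1 \<or> x ^ j = -1"
  by (cases "even j") auto

context oddf
begin

lemma cheb_pm1: "(u::'a) = 1 \<or> u = -1 \<Longrightarrow> cheb k u = 1 \<or> cheb k u = -1"
proof -
  assume "u = 1 \<or> u = -1"
  then show ?thesis
  proof
    assume "u = 1" then show ?thesis by (simp add: cheb_1)
  next
    assume "u = -1" then show ?thesis by (cases "even k") (simp_all add: cheb_m1)
  qed
qed

lemma split_pow_pm1:
  assumes l: "(l::'a) \<noteq> 0" and d: "(card (UNIV::'a set) - 1) div 2 dvd k"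
  shows "l ^ k = 1 \<or> l ^ k = -1"
proof -
  define d where "d = (card (UNIV::'a set) - 1) div 2"
  have "2 * d = card (UNIV::'a set) - 1" unfolding d_def using oddq by simp
  then have "(l ^ d) ^ 2 = 1" using fermat[OF l] by (simp add: power_mult[symmetric] mult.commute)
  then have "1 ^ 2 = (l ^ d) ^ 2" by simp
  then have "l ^ d = 1 \<or> l ^ d = -1" by (rule sq_eq_iff[THEN iffD1])
  moreover obtain j where "k = d * j" using d unfolding d_def by (auto elim: dvdE)
  ultimately show ?thesis using pm1_pow[of "l ^ d" j] by (simp add: power_mult)
qed

lemma GG_card_pow: "(z::'a ext) \<in> GG \<Longrightarrow> z ^ (card (UNIV::'a set) + 1) = 1"
  using grp_pow_card[of "GG :: 'a ext set" z] GG_one GG_cl GG_iv card_GG by metis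

lemma GG_pow_pm1:
  assumes z: "(z::'a ext) \<in> GG" and d: "(card (UNIV::'a set) + 1) div 2 dvd k"
  shows "z ^ k = 1 \<or> z ^ k = -1"
proof -
  define d where "d = (card (UNIV::'a set) + 1) div 2"
  have "2 * d = card (UNIV::'a set) + 1" unfolding d_def using oddq by simp
  then have "(z ^ d) ^ 2 = 1" using GG_card_pow[OF z] by (simp add: power_mult[symmetric] mult.commute)
  then have "z ^ d = 1 \<or> z ^ d = -1" by (rule ext_sq_one)
  moreover obtain j where "k = d * j" using d unfolding d_def by (auto elim: dvdE)
  ultimately show ?thesis using pm1_pow[of "z ^ d" j] by (simp add: power_mult)
qed

lemma Aset_nu_sets:
  "Aset (1::'a) (- leg (2::'a)) (leg (2::'a)) \<union> Aset 1 (leg (2::'a)) (- leg (2::'a)) = Aset 1 1 (-1) \<union> Aset 1 (-1) 1"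
  "Aset (1::'a) (leg (2::'a)) (leg (2::'a)) \<union> Aset 1 (- leg (2::'a)) (- leg (2::'a)) = Aset 1 1 1 \<union> Aset 1 (-1) (-1)"
  using nu_vals by auto

lemma nonsplit_img:
  assumes z: "(z::'a ext) \<in> GG"
  shows "re z \<in> Aset 1 (- leg (2::'a)) (leg (2::'a)) \<union> Aset 1 (leg (2::'a)) (- leg (2::'a)) \<union> {1, -1}"
proof (cases "z \<in> KG")
  case True then show ?thesis using re_K_img[OF True] by auto
next
  case False then show ?thesis using re_nK_img[of z] z by auto
qed

lemma split_img:
  assumes l: "(l::'a) \<noteq> 0"
  shows "uS l \<in> Aset 1 (leg (2::'a)) (leg (2::'a)) \<union> Aset 1 (- leg (2::'a)) (- leg (2::'a)) \<union> {1, -1}"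
proof (cases "l \<in> sqs")
  case True then show ?thesis using uS_sq_img[OF True] by auto
next
  case False then show ?thesis using uS_nsq_img[OF l False] by auto
qed

lemma cases_u:
  fixes u :: 'a
  obtains "u = 1 \<or> u = -1" | l where "l \<noteq> 0" "u = uS l" | z where "z \<in> GG" "u = re z"
  using cover by blast

lemma part_iv:
  assumes d: "(card (UNIV::'a set) - 1) div 2 dvd k"
  shows "cheb k ` (UNIV::'a set) \<subseteq> Aset 1 1 (-1) \<union> Aset 1 (-1) 1 \<union> {1, -1}"
    and "even k \<Longrightarrow> cheb k ` (UNIV::'a set) \<subseteq> Aset 1 (- leg (2::'a)) (leg (2::'a)) \<union> {1, -1}"
proof -
  have A: "cheb k u \<in> Aset 1 (- leg (2::'a)) (leg (2::'a)) \<union> Aset 1 (leg (2::'a)) (- leg (2::'a)) \<union> {1, -1}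
     \<and> (even k \<longrightarrow> cheb k u \<in> Aset 1 (- leg (2::'a)) (leg (2::'a)) \<union> {1, -1})" for u :: 'a
  proof (cases u rule: cases_u)
    case 1 then show ?thesis using cheb_pm1[of u k] by auto
  next
    case (2 l)
    then have "cheb k u = uS (l ^ k)" using uS_cheb by simp
    then have "cheb k u = 1 \<or> cheb k u = -1" using split_pow_pm1[OF 2(1) d] uS_one uS_mone by auto
    then show ?thesis by auto
  next
    case (3 z)
    then have e: "cheb k u = re (z ^ k)" using GG_uch by simp
    have "re (z ^ k) \<in> Aset 1 (- leg (2::'a)) (leg (2::'a)) \<union> Aset 1 (leg (2::'a)) (- leg (2::'a)) \<union> {1, -1}"
      using nonsplit_img[OF GG_pow[OF 3(1)]] .
    moreover have "even k \<longrightarrow> re (z ^ k) \<in> Aset 1 (- leg (2::'a)) (leg (2::'a)) \<union> {1, -1}"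
      using re_K_img[OF GG_even[OF 3(1)]] by auto
    ultimately show ?thesis using e by simp
  qed
  show "cheb k ` (UNIV::'a set) \<subseteq> Aset 1 1 (-1) \<union> Aset 1 (-1) 1 \<union> {1, -1}"
    using A Aset_nu_sets(1) by blast
  show "even k \<Longrightarrow> cheb k ` (UNIV::'a set) \<subseteq> Aset 1 (- leg (2::'a)) (leg (2::'a)) \<union> {1, -1}"
    using A by blast
qed

lemma part_v:
  assumes d: "(card (UNIV::'a set) + 1) div 2 dvd k"
  shows "cheb k ` (UNIV::'a set) \<subseteq> Aset 1 1 1 \<union> Aset 1 (-1) (-1) \<union> {1, -1}"
    and "even k \<Longrightarrow> cheb k ` (UNIV::'a set) \<subseteq> Aset 1 (leg (2::'a)) (leg (2::'a)) \<union> {1, -1}"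
proof -
  have A: "cheb k u \<in> Aset 1 (leg (2::'a)) (leg (2::'a)) \<union> Aset 1 (- leg (2::'a)) (- leg (2::'a)) \<union> {1, -1}
     \<and> (even k \<longrightarrow> cheb k u \<in> Aset 1 (leg (2::'a)) (leg (2::'a)) \<union> {1, -1})" for u :: 'a
  proof (cases u rule: cases_u)
    case 1 then show ?thesis using cheb_pm1[of u k] by auto
  next
    case (2 l)
    then have e: "cheb k u = uS (l ^ k)" using uS_cheb by simp
    have "l ^ k \<noteq> 0" using 2(1) by simp
    then have "uS (l ^ k) \<in> Aset 1 (leg (2::'a)) (leg (2::'a)) \<union> Aset 1 (- leg (2::'a)) (- leg (2::'a)) \<union> {1, -1}"
      by (rule split_img)
    moreover have "even k \<longrightarrow> uS (l ^ k) \<in> Aset 1 (leg (2::'a)) (leg (2::'a)) \<union> {1, -1}"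
      using uS_sq_img[OF nz_even_sqs[OF 2(1)]] by auto
    ultimately show ?thesis using e by simp
  next
    case (3 z)
    then have "cheb k u = re (z ^ k)" using GG_uch by simp
    then have "cheb k u = 1 \<or> cheb k u = -1" using GG_pow_pm1[OF 3(1) d] by auto
    then show ?thesis by auto
  qed
  show "cheb k ` (UNIV::'a set) \<subseteq> Aset 1 1 1 \<union> Aset 1 (-1) (-1) \<union> {1, -1}"
    using A Aset_nu_sets(2) by blast
  show "even k \<Longrightarrow> cheb k ` (UNIV::'a set) \<subseteq> Aset 1 (leg (2::'a)) (leg (2::'a)) \<union> {1, -1}"
    using A by blast
qed

lemma leg_sqm1: "leg ((a::'a) ^ 2 - 1) = leg (a - 1) * leg (a + 1)"
proof -
  have "a ^ 2 - 1 = (a - 1) * (a + 1)" by (simp add: power2_eq_square algebra_simps)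
  then show ?thesis by (simp add: leg_mult)
qed

lemma int_prod_m1: "(x::int) \<in> {-1, 0, 1} \<Longrightarrow> y \<in> {-1, 0, 1} \<Longrightarrow>
   x * y = -1 \<longleftrightarrow> (x = 1 \<and> y = -1 \<or> x = -1 \<and> y = 1)"
  by auto

lemma seteq_iv: "Aset (1::'a) 1 (-1) \<union> Aset 1 (-1) 1 = {a::'a. leg (a ^ 2 - 1) = -1}"
proof (rule Set.set_eqI)
  fix a :: 'a
  have "a \<in> Aset 1 1 (-1) \<union> Aset 1 (-1) 1 \<longleftrightarrow> (leg (a - 1) = 1 \<and> leg (a + 1) = -1 \<or> leg (a - 1) = -1 \<and> leg (a + 1) = 1)"
    by (simp add: Aset_mem)
  also have "\<dots> \<longleftrightarrow> leg (a - 1) * leg (a + 1) = -1"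
    using int_prod_m1[OF leg_vals[of "a - 1"] leg_vals[of "a + 1"]] by simp
  also have "\<dots> \<longleftrightarrow> a \<in> {a::'a. leg (a ^ 2 - 1) = -1}" by (simp add: leg_sqm1)
  finally show "a \<in> Aset 1 1 (-1) \<union> Aset 1 (-1) 1 \<longleftrightarrow> a \<in> {a::'a. leg (a ^ 2 - 1) = -1}" .
qed

lemma int_prod_nm1: "(x::int) \<in> {-1, 0, 1} \<Longrightarrow> y \<in> {-1, 0, 1} \<Longrightarrow>
   x * y \<noteq> -1 \<longleftrightarrow> (x = 1 \<and> y = 1 \<or> x = -1 \<and> y = -1 \<or> x = 0 \<or> y = 0)"
  by auto

lemma seteq_v: "Aset (1::'a) 1 1 \<union> Aset 1 (-1) (-1) \<union> {1, -1} = {a::'a. leg (a ^ 2 - 1) \<noteq> -1}"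
proof (rule Set.set_eqI)
  fix a :: 'a
  have z: "(leg (a - 1) = 0 \<or> leg (a + 1) = 0) \<longleftrightarrow> (a = 1 \<or> a = -1)"
  proof -
    have "leg (a - 1) = 0 \<longleftrightarrow> a = 1" by (simp add: leg_zero)
    moreover have "leg (a + 1) = 0 \<longleftrightarrow> a = -1" by (simp add: leg_zero add_eq_0_iff2)
    ultimately show ?thesis by blast
  qed
  have "a \<in> Aset 1 1 1 \<union> Aset 1 (-1) (-1) \<union> {1, -1} \<longleftrightarrow>
      (leg (a - 1) = 1 \<and> leg (a + 1) = 1 \<or> leg (a - 1) = -1 \<and> leg (a + 1) = -1 \<or> (a = 1 \<or> a = -1))"
    by (simp add: Aset_mem) blast
  also have "\<dots> \<longleftrightarrow> (leg (a - 1) = 1 \<and> leg (a + 1) = 1 \<or> leg (a - 1) = -1 \<and> leg (a + 1) = -1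
      \<or> leg (a - 1) = 0 \<or> leg (a + 1) = 0)" using z by blast
  also have "\<dots> \<longleftrightarrow> leg (a - 1) * leg (a + 1) \<noteq> -1"
    using int_prod_nm1[OF leg_vals[of "a - 1"] leg_vals[of "a + 1"]] by simp
  also have "\<dots> \<longleftrightarrow> a \<in> {a::'a. leg (a ^ 2 - 1) \<noteq> -1}" by (simp add: leg_sqm1)
  finally show "a \<in> Aset 1 1 1 \<union> Aset 1 (-1) (-1) \<union> {1, -1} \<longleftrightarrow> a \<in> {a::'a. leg (a ^ 2 - 1) \<noteq> -1}" .
qed

end



context oddf
begin

lemma nu_sq: "leg (2::'a) * leg (2::'a) = 1" using nu_vals by auto

lemma card_UNIV_nz: "card (UNIV - {0::'a}) = card (UNIV::'a set) - 1" by (rule card_nz)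

lemma part_vi:
  assumes e1: "e1 \<in> {1, -1}" and e2: "e2 \<in> {1, -1}" and ne: "Aset (1::'a) e1 e2 \<noteq> {}"
  shows "bij_betw (cheb k) (Aset (1::'a) e1 e2) (Aset 1 e1 e2)
     \<longleftrightarrow> gcd k (dpar (card (UNIV::'a set)) (leg (2::'a) * e1) (leg (2::'a) * e2)) = 1"
proof -
  interpret S: absgrp "UNIV - {0::'a}" uS k by (rule absgrp_S)
  interpret N: absgrp "GG :: 'a ext set" re k by (rule absgrp_N)
  have SK: "S.K = sqs" by (rule S_K)
  have NK: "N.K = KG" by (rule N_K)
  have E1: "e1 = leg (2::'a) \<or> e1 = - leg (2::'a)" using e1 nu_vals by auto
  have E2: "e2 = leg (2::'a) \<or> e2 = - leg (2::'a)" using e2 nu_vals by auto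
  have finK: "finite S.K" and finNK: "finite N.K" by simp_all
  have cardS: "card S.K = (card (UNIV::'a set) - 1) div 2" using card_sqs SK by simp
  have cardNK: "card N.K = (card (UNIV::'a set) + 1) div 2" using card_KG NK by simp
  have gc: "gcd k d = 1 \<longleftrightarrow> coprime k d" for d :: nat by (simp add: coprime_iff_gcd_eq_1)
  from E1 E2 show ?thesis
  proof (elim disjE)
    assume a: "e1 = leg (2::'a)" "e2 = leg (2::'a)"
    have A: "Aset (1::'a) e1 e2 = uS ` (S.K - {1, -1})" using a class_nn SK by simp
    have "bij_betw (cheb k) (Aset (1::'a) e1 e2) (Aset 1 e1 e2) \<longleftrightarrow> inj_on (\<lambda>x. x ^ k) S.K"
      by (rule S.cheb_bij_K[OF A ne])
    also have "\<dots> \<longleftrightarrow> coprime k (card S.K)"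
      by (rule pow_inj_iff[OF finK S.Kone S.Kcl S.Kiv])
    finally show ?thesis using a nu_sq cardS gc by (simp add: dpar_def)
  next
    assume a: "e1 = leg (2::'a)" "e2 = - leg (2::'a)"
    have A: "Aset (1::'a) e1 e2 = re ` ((GG - N.K) - {1, -1})" using a class_nm NK by simp
    have "bij_betw (cheb k) (Aset (1::'a) e1 e2) (Aset 1 e1 e2) \<longleftrightarrow> inj_on (\<lambda>x. x ^ k) (GG :: 'a ext set)"
      by (rule N.cheb_bij_S[OF A ne])
    also have "\<dots> \<longleftrightarrow> coprime k (card (GG :: 'a ext set))"
      by (rule pow_inj_iff[OF GG_fin GG_one GG_cl GG_iv])
    finally show ?thesis using a nu_sq card_GG gc by (simp add: dpar_def)
  next
    assume a: "e1 = - leg (2::'a)" "e2 = leg (2::'a)"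
    have A: "Aset (1::'a) e1 e2 = re ` (N.K - {1, -1})" using a class_mn NK by simp
    have "bij_betw (cheb k) (Aset (1::'a) e1 e2) (Aset 1 e1 e2) \<longleftrightarrow> inj_on (\<lambda>x. x ^ k) N.K"
      by (rule N.cheb_bij_K[OF A ne])
    also have "\<dots> \<longleftrightarrow> coprime k (card N.K)"
      by (rule pow_inj_iff[OF finNK N.Kone N.Kcl N.Kiv])
    finally show ?thesis using a nu_sq cardNK gc by (simp add: dpar_def)
  next
    assume a: "e1 = - leg (2::'a)" "e2 = - leg (2::'a)"
    have A: "Aset (1::'a) e1 e2 = uS ` ((UNIV - {0}) - S.K - {1, -1})" using a class_mm SK by simp
    have "bij_betw (cheb k) (Aset (1::'a) e1 e2) (Aset 1 e1 e2) \<longleftrightarrow> inj_on (\<lambda>x. x ^ k) (UNIV - {0::'a})"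
      by (rule S.cheb_bij_S[OF A ne])
    also have "\<dots> \<longleftrightarrow> coprime k (card (UNIV - {0::'a}))"
      by (rule pow_inj_iff[OF S.fin S.one S.cl S.iv])
    finally show ?thesis using a nu_sq card_nz gc by (simp add: dpar_def)
  qed
qed

end



theorem theorem9p1:
  fixes k :: nat
  assumes oddq: "odd (card (UNIV::'a::{finite,field} set))"
    and k1: "k \<ge> 1"
  defines "q \<equiv> card (UNIV::'a set)"
    and "\<epsilon> \<equiv> leg (-1::'a)"
    and "\<nu> \<equiv> leg (2::'a)"
  shows "cheb k (1::'a) = 1 \<and> cheb k (-1::'a) = (-1) ^ k
    \<and> (cheb k ` Aset (1::'a) \<nu> \<nu> \<subseteq> Aset 1 \<nu> \<nu> \<union> {1, - of_int \<epsilon>}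
       \<and> cheb k ` Aset (1::'a) (-\<nu>) \<nu> \<subseteq> Aset 1 (-\<nu>) \<nu> \<union> {1, of_int \<epsilon>})
    \<and> (odd k \<longrightarrow>
         cheb k ` Aset (1::'a) (\<epsilon>*\<nu>) (-\<nu>) \<subseteq> Aset 1 (\<epsilon>*\<nu>) (-\<nu>) \<union> {-1}
       \<and> cheb k ` Aset (1::'a) (-\<epsilon>*\<nu>) (-\<nu>) \<subseteq> Aset 1 (-\<epsilon>*\<nu>) (-\<nu>))
    \<and> (even k \<longrightarrow>
         cheb k ` Aset (1::'a) (-\<nu>) (-\<nu>) \<subseteq> Aset 1 \<nu> \<nu> \<union> {1, - of_int \<epsilon>}
       \<and> cheb k ` Aset (1::'a) \<nu> (-\<nu>) \<subseteq> Aset 1 (-\<nu>) \<nu> \<union> {1, of_int \<epsilon>})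
    \<and> ((q - 1) div 2 dvd k \<longrightarrow>
         cheb k ` (UNIV::'a set) \<subseteq> Aset 1 1 (-1) \<union> Aset 1 (-1) 1 \<union> {1, -1}
       \<and> Aset (1::'a) 1 (-1) \<union> Aset 1 (-1) 1 = {a. leg (a ^ 2 - 1) = -1}
       \<and> (even k \<longrightarrow> cheb k ` (UNIV::'a set) \<subseteq> Aset 1 (-\<nu>) \<nu> \<union> {1, -1}))
    \<and> ((q + 1) div 2 dvd k \<longrightarrow>
         cheb k ` (UNIV::'a set) \<subseteq> Aset 1 1 1 \<union> Aset 1 (-1) (-1) \<union> {1, -1}
       \<and> Aset (1::'a) 1 1 \<union> Aset 1 (-1) (-1) \<union> {1, -1} = {a. leg (a ^ 2 - 1) \<noteq> -1}
       \<and> (even k \<longrightarrow> cheb k ` (UNIV::'a set) \<subseteq> Aset 1 \<nu> \<nu> \<union> {1, -1}))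
    \<and> (\<forall>e1\<in>{1, -1}. \<forall>e2\<in>{1, -1}. Aset (1::'a) e1 e2 \<noteq> {} \<longrightarrow>
         (bij_betw (cheb k) (Aset (1::'a) e1 e2) (Aset 1 e1 e2)
          \<longleftrightarrow> gcd k (dpar q (\<nu> * e1) (\<nu> * e2)) = 1))"
proof -
  interpret oddf "TYPE('a)" by unfold_locales (rule oddq)
  have P0: "cheb k (1::'a) = 1 \<and> cheb k (-1::'a) = (-1) ^ k" by (simp add: cheb_1 cheb_m1)
  have P1: "cheb k ` Aset (1::'a) \<nu> \<nu> \<subseteq> Aset 1 \<nu> \<nu> \<union> {1, - of_int \<epsilon>}
       \<and> cheb k ` Aset (1::'a) (-\<nu>) \<nu> \<subseteq> Aset 1 (-\<nu>) \<nu> \<union> {1, of_int \<epsilon>}"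
    unfolding \<nu>_def \<epsilon>_def by (rule conjI[OF part_i1 part_i2])
  have P2: "odd k \<longrightarrow>
         cheb k ` Aset (1::'a) (\<epsilon>*\<nu>) (-\<nu>) \<subseteq> Aset 1 (\<epsilon>*\<nu>) (-\<nu>) \<union> {-1}
       \<and> cheb k ` Aset (1::'a) (-\<epsilon>*\<nu>) (-\<nu>) \<subseteq> Aset 1 (-\<epsilon>*\<nu>) (-\<nu>)"
  proof
    assume ok: "odd k"
    from ep_vals show "cheb k ` Aset (1::'a) (\<epsilon>*\<nu>) (-\<nu>) \<subseteq> Aset 1 (\<epsilon>*\<nu>) (-\<nu>) \<union> {-1}
       \<and> cheb k ` Aset (1::'a) (-\<epsilon>*\<nu>) (-\<nu>) \<subseteq> Aset 1 (-\<epsilon>*\<nu>) (-\<nu>)"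
    proof
      assume e: "leg (-1::'a) = 1"
      then show ?thesis unfolding \<nu>_def \<epsilon>_def using part_nm_odd(1)[OF ok] part_mm_odd(2)[OF ok e] by simp
    next
      assume e: "leg (-1::'a) = -1"
      then show ?thesis unfolding \<nu>_def \<epsilon>_def using part_mm_odd(1)[OF ok] part_nm_odd(2)[OF ok e] by simp
    qed
  qed
  have P3: "even k \<longrightarrow>
         cheb k ` Aset (1::'a) (-\<nu>) (-\<nu>) \<subseteq> Aset 1 \<nu> \<nu> \<union> {1, - of_int \<epsilon>}
       \<and> cheb k ` Aset (1::'a) \<nu> (-\<nu>) \<subseteq> Aset 1 (-\<nu>) \<nu> \<union> {1, of_int \<epsilon>}"
    unfolding \<nu>_def \<epsilon>_def using part_mm_even part_nm_even by (intro impI conjI) auto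
  have P4: "(q - 1) div 2 dvd k \<longrightarrow>
         cheb k ` (UNIV::'a set) \<subseteq> Aset 1 1 (-1) \<union> Aset 1 (-1) 1 \<union> {1, -1}
       \<and> Aset (1::'a) 1 (-1) \<union> Aset 1 (-1) 1 = {a. leg (a ^ 2 - 1) = -1}
       \<and> (even k \<longrightarrow> cheb k ` (UNIV::'a set) \<subseteq> Aset 1 (-\<nu>) \<nu> \<union> {1, -1})"
  proof
    assume d: "(q - 1) div 2 dvd k"
    then have d': "(card (UNIV::'a set) - 1) div 2 dvd k" by (simp add: q_def)
    show "cheb k ` (UNIV::'a set) \<subseteq> Aset 1 1 (-1) \<union> Aset 1 (-1) 1 \<union> {1, -1}
       \<and> Aset (1::'a) 1 (-1) \<union> Aset 1 (-1) 1 = {a. leg (a ^ 2 - 1) = -1}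
       \<and> (even k \<longrightarrow> cheb k ` (UNIV::'a set) \<subseteq> Aset 1 (-\<nu>) \<nu> \<union> {1, -1})"
      unfolding \<nu>_def using part_iv(1)[OF d'] seteq_iv part_iv(2)[OF d'] by simp
  qed
  have P5: "(q + 1) div 2 dvd k \<longrightarrow>
         cheb k ` (UNIV::'a set) \<subseteq> Aset 1 1 1 \<union> Aset 1 (-1) (-1) \<union> {1, -1}
       \<and> Aset (1::'a) 1 1 \<union> Aset 1 (-1) (-1) \<union> {1, -1} = {a. leg (a ^ 2 - 1) \<noteq> -1}
       \<and> (even k \<longrightarrow> cheb k ` (UNIV::'a set) \<subseteq> Aset 1 \<nu> \<nu> \<union> {1, -1})"
  proof
    assume d: "(q + 1) div 2 dvd k"
    then have d': "(card (UNIV::'a set) + 1) div 2 dvd k" by (simp add: q_def)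
    show "cheb k ` (UNIV::'a set) \<subseteq> Aset 1 1 1 \<union> Aset 1 (-1) (-1) \<union> {1, -1}
       \<and> Aset (1::'a) 1 1 \<union> Aset 1 (-1) (-1) \<union> {1, -1} = {a. leg (a ^ 2 - 1) \<noteq> -1}
       \<and> (even k \<longrightarrow> cheb k ` (UNIV::'a set) \<subseteq> Aset 1 \<nu> \<nu> \<union> {1, -1})"
      unfolding \<nu>_def using part_v(1)[OF d'] seteq_v part_v(2)[OF d'] by simp
  qed
  have P6: "\<forall>e1\<in>{1, -1}. \<forall>e2\<in>{1, -1}. Aset (1::'a) e1 e2 \<noteq> {} \<longrightarrow>
         (bij_betw (cheb k) (Aset (1::'a) e1 e2) (Aset 1 e1 e2)
          \<longleftrightarrow> gcd k (dpar q (\<nu> * e1) (\<nu> * e2)) = 1)"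
    unfolding q_def \<nu>_def using part_vi by simp
  show ?thesis
    apply (rule conjI, rule P0[THEN conjunct1])
    apply (rule conjI, rule P0[THEN conjunct2])
    apply (rule conjI, rule P1)
    apply (rule conjI, rule P2)
    apply (rule conjI, rule P3)
    apply (rule conjI, rule P4)
    apply (rule conjI, rule P5)
    apply (rule P6)
    done
qed


end
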